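(* Let $(A,I)\in\mathcal{C}$ and let $N$ be an integer not appearing in $A$. Let $a$ be the word obtained from $A$ by removing all letters larger than $N$. Suppose $\Psi^{-1}(A,I)=(P,Q)$ and $\Psi^{-1}(a,i)=(p,q)$ for some word $i$ with $(a,i)\in\mathcal{C}$. Then removing all entries larger than $N$ from $P$ yields $p$.
   Context: Tableaux are in English convention; $T(r,c)$ is the entry at row $r$, column $c$. An increasing tableau has positive integer entries strictly increasing along rows and columns. A reverse set-valued tableau (RSVT) is a filling of a Young diagram with nonempty finite subsets of $\mathbb{Z}_{>0}$ with $\min Q(r,c)\ge\max Q(r,c+1)$ and $\min Q(r,c)>\max Q(r+1,c)$. $\mathcal{T}$ is the set of pairs $(P,Q)$, $P$ increasing, $Q$ an RSVT of the same shape. A compatible pair $(a,i)$ consists of two words of the same length with $i$ weakly increasing and $i_j=i_{j+1}\Rightarrow a_j>a_{j+1}$; $\mathcal{C}$ is the set of compatible pairs. Reverse row insertion. $P_{r\downarrow}$ is $P$ with its first $r-1$ rows deleted. A value $x$ is ejectable in $P$ if $x$ is in the first row and either $x+1$ is not in the first row, or $x+1$ is in the first row and ejectable in $P_{2\downarrow}$. A cell $(r,c)$ is outer if neither $(r+1,c)$ nor $(r,c+1)$ is a cell. The bumping path of $(r,c)$ is $(r,c_r),\dots,(1,c_1)$ with $c_r=c$ and $c_i$ the largest index with $P(i,c_i)<P(i+1,c_{i+1})$; $m_i=P(i,c_i)$. Input $P$, outer cell $(r,c)$, $\alpha\in\{0,1\}$; output $(P',m)$, $m=m_1$. Start with $P'=P$;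 if $\alpha=1$ delete cell $(r,c)$ from $P'$, $\alpha_r=1$, $i=r-1$; if $\alpha=0$, $m_{r+1}=\infty$, $\alpha_{r+1}=0$, $i=r$. While $i\ge1$, with $R$ the entries of row $i$ of $P$: (D) if $m_i+1\in R$ leave row $i$, $\alpha_i=\alpha_{i+1}$; (DR) else if $\alpha_{i+1}=1$ and $m_{i+1}\notin R$ replace $m_i$ by $m_{i+1}$ in row $i$ of $P'$, $\alpha_i=1$; otherwise let $x$ be the largest value ejectable in the current $P'_{(i+1)\downarrow}$ with $m_i<x<m_{i+1}$: (IR) if it exists replace $m_i$ by $x$ in row $i$ of $P'$, $\alpha_i=1$; (NR) otherwise leave row $i$, $\alpha_i=0$. Decrease $i$; at $i=0$ output $P'$. The map $\Psi:\mathcal{T}\to\mathcal{C}$: the pair of empty tableaux maps to the pair of empty words. Otherwise let $q$ be the minimum entry of $Q$ and $(r,c)$ the rightmost cell with $q\in Q(r,c)$; if $Q(r,c)=\{q\}$ delete that cell to get $Q'$ and reverse-insert $(P,(r,c),1)$, otherwise remove $q$ from $Q(r,c)$ to get $Q'$ and reverse-insert $(P,(r,c),0)$, obtaining $(P',m)$; then $\Psi(P,Q)=(m\,a',\,q\,i')$ where $(a',i')=\Psi(P',Q')$. It is known that $\Psi$ is a bijection from $\mathcal{T}$ to $\mathcal{C}$. *)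

theory Defs
  imports Main "HOL-Library.Extended_Nat"
begin

(* Cells are (row, column), 1-indexed, English convention.
   A tableau is a finite partial map from cells to entries; its domain is its shape. *)
type_synonym tab = "(nat \<times> nat) \<Rightarrow> nat option"
type_synonym stab = "(nat \<times> nat) \<Rightarrow> nat set option"

definition young_diagram :: "(nat \<times> nat) set \<Rightarrow> bool" where
  "young_diagram D \<longleftrightarrow> finite D \<and> (\<forall>(r,c)\<in>D. r \<ge> 1 \<and> c \<ge> 1) \<and>
     (\<forall>r c r' c'. (r,c) \<in> D \<longrightarrow> 1 \<le> r' \<longrightarrow> r' \<le> r \<longrightarrow> 1 \<le> c' \<longrightarrow> c' \<le> c \<longrightarrow> (r',c') \<in> D)"

definition increasing_tableau :: "tab \<Rightarrow> bool" where
  "increasing_tableau P \<longleftrightarrow> young_diagram (dom P) \<and> (\<forall>v\<in>ran P. v > 0) \<and>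
     (\<forall>r c u v. P (r,c) = Some u \<longrightarrow> P (r, c+1) = Some v \<longrightarrow> u < v) \<and>
     (\<forall>r c u v. P (r,c) = Some u \<longrightarrow> P (r+1, c) = Some v \<longrightarrow> u < v)"

definition rsvt :: "stab \<Rightarrow> bool" where
  "rsvt Q \<longleftrightarrow> young_diagram (dom Q) \<and>
     (\<forall>S\<in>ran Q. S \<noteq> {} \<and> finite S \<and> (\<forall>x\<in>S. x > 0)) \<and>
     (\<forall>r c S U. Q (r,c) = Some S \<longrightarrow> Q (r, c+1) = Some U \<longrightarrow> Min S \<ge> Max U) \<and>
     (\<forall>r c S U. Q (r,c) = Some S \<longrightarrow> Q (r+1, c) = Some U \<longrightarrow> Min S > Max U)"

definition calT :: "(tab \<times> stab) set" where
  "calT = {(P,Q). increasing_tableau P \<and> rsvt Q \<and> dom P = dom Q}"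

definition calC :: "(nat list \<times> nat list) set" where
  "calC = {(a,i). length a = length i \<and> (\<forall>x\<in>set a. x > 0) \<and> (\<forall>x\<in>set i. x > 0) \<and>
     sorted i \<and> (\<forall>j. Suc j < length i \<longrightarrow> i ! j = i ! Suc j \<longrightarrow> a ! j > a ! Suc j)}"

definition row :: "tab \<Rightarrow> nat \<Rightarrow> nat set" where
  "row P k = {v. \<exists>c. P (k,c) = Some v}"

(* ejectable P k x : x is ejectable in P_{k\<down>} (rows k, k+1, ... of P) *)
inductive ejectable :: "tab \<Rightarrow> nat \<Rightarrow> nat \<Rightarrow> bool" where
  ej_stop: "x \<in> row P k \<Longrightarrow> x + 1 \<notin> row P k \<Longrightarrow> ejectable P k x"
| ej_step: "x \<in> row P k \<Longrightarrow> x + 1 \<in> row P k \<Longrightarrow> ejectable P (k+1) (x+1) \<Longrightarrow> ejectable P k x"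

(* bumping path of the cell (r,c): bcol_d P r c d is the column c_{r-d} *)
fun bcol_d :: "tab \<Rightarrow> nat \<Rightarrow> nat \<Rightarrow> nat \<Rightarrow> nat" where
  "bcol_d P r c 0 = c"
| "bcol_d P r c (Suc d) = (GREATEST c'. \<exists>v w. P (r - Suc d, c') = Some v \<and>
        P (r - d, bcol_d P r c d) = Some w \<and> v < w)"

definition bcol :: "tab \<Rightarrow> nat \<Rightarrow> nat \<Rightarrow> nat \<Rightarrow> nat" where
  "bcol P r c i = bcol_d P r c (r - i)"

(* main loop of reverse row insertion, processing rows i = Suc j, j, ..., 1.
   Arguments: original P, the cell (r,c), i, current P', alpha_{i+1}, m_{i+1} (\<infinity> allowed). *)
fun rloop :: "tab \<Rightarrow> nat \<Rightarrow> nat \<Rightarrow> nat \<Rightarrow> tab \<Rightarrow> bool \<Rightarrow> enat \<Rightarrow> tab" where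
  "rloop P r c 0 P' al ub = P'"
| "rloop P r c (Suc j) P' al ub =
     (let i = Suc j; ci = bcol P r c i; mi = the (P (i, ci)); R = row P i;
          X = {x. ejectable P' (i+1) x \<and> mi < x \<and> enat x < ub} in
      if mi + 1 \<in> R then rloop P r c j P' al (enat mi)
      else if al \<and> ub \<noteq> \<infinity> \<and> the_enat ub \<notin> R
        then rloop P r c j (P'((i, ci) := Some (the_enat ub))) True (enat mi)
      else if X \<noteq> {} then rloop P r c j (P'((i, ci) := Some (Max X))) True (enat mi)
      else rloop P r c j P' False (enat mi))"

definition rev_insert :: "tab \<Rightarrow> nat \<times> nat \<Rightarrow> bool \<Rightarrow> tab \<times> nat" where
  "rev_insert P rc al = (case rc of (r,c) \<Rightarrow>
     (if al then rloop P r c (r - 1) (P((r,c) := None)) True (enat (the (P (r,c))))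
      else rloop P r c r P False \<infinity>,
      the (P (1, bcol P r c 1))))"

definition psi_step :: "tab \<Rightarrow> stab \<Rightarrow> tab \<times> stab \<times> nat \<times> nat" where
  "psi_step P Q =
    (let q = Min (\<Union> (ran Q));
         c = (GREATEST c. \<exists>r S. Q (r,c) = Some S \<and> q \<in> S);
         r = (THE r. \<exists>S. Q (r,c) = Some S \<and> q \<in> S);
         S = the (Q (r,c))
     in if S = {q}
        then (fst (rev_insert P (r,c) True), Q((r,c) := None), snd (rev_insert P (r,c) True), q)
        else (fst (rev_insert P (r,c) False), Q((r,c) := Some (S - {q})),
              snd (rev_insert P (r,c) False), q))"

inductive Psi_graph :: "tab \<Rightarrow> stab \<Rightarrow> nat list \<Rightarrow> nat list \<Rightarrow> bool" where
  psi_empty: "Psi_graph Map.empty Map.empty [] []"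
| psi_step: "Q \<noteq> Map.empty \<Longrightarrow> psi_step P Q = (P', Q', m, q) \<Longrightarrow> Psi_graph P' Q' a' i' \<Longrightarrow>
      Psi_graph P Q (m # a') (q # i')"

definition restrict_le :: "int \<Rightarrow> tab \<Rightarrow> tab" where
  "restrict_le N P = (\<lambda>x. case P x of None \<Rightarrow> None | Some v \<Rightarrow> if int v \<le> N then Some v else None)"

end

theory Submission
  imports Defs
begin


definition nxt_ok :: "tab \<Rightarrow> tab \<Rightarrow> nat \<Rightarrow> nat \<Rightarrow> nat \<Rightarrow> nat \<Rightarrow> bool" where
  "nxt_ok P F i ci y m' \<longleftrightarrow> y < m' \<and> (P (i, Suc ci) = Some m' \<or> ejectable F (Suc i) m') \<and>
     (\<forall>z. y < z \<longrightarrow> z < m' \<longrightarrow> \<not> ejectable F (Suc i) z) \<and> (\<forall>w. P (i, Suc ci) = Some w \<longrightarrow> m' \<le> w)"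

definition mid_ok :: "tab \<Rightarrow> tab \<Rightarrow> nat \<Rightarrow> nat \<Rightarrow> nat \<Rightarrow> nat \<Rightarrow> bool" where
  "mid_ok P F i ci mi m' \<longleftrightarrow> (\<exists>y. F (i, ci) = Some y \<and> mi \<le> y \<and>
     (if mi + 1 \<in> row P i then m' = mi + 1 \<and> y = mi
      else if mi < y \<and> \<not> ejectable F (Suc i) y then m' = y \<and> m' \<notin> row P i
      else nxt_ok P F i ci y m'))"

definition end_ok :: "tab \<Rightarrow> tab \<Rightarrow> nat \<Rightarrow> nat \<Rightarrow> nat \<Rightarrow> bool \<Rightarrow> bool" where
  "end_ok P F r cr mr al \<longleftrightarrow> (if al then F (r, cr) = None else
     (\<exists>y. F (r, cr) = Some y \<and> mr \<le> y \<and> (y = mr \<or> ejectable F (Suc r) y) \<and>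
        (\<forall>z. y < z \<longrightarrow> \<not> ejectable F (Suc r) z) \<and> mr + 1 \<notin> row P r \<and> P (r, Suc cr) = None))"

definition cert :: "tab \<Rightarrow> tab \<Rightarrow> nat \<Rightarrow> nat \<Rightarrow> bool \<Rightarrow> (nat \<Rightarrow> nat) \<Rightarrow> (nat \<Rightarrow> nat) \<Rightarrow> bool" where
  "cert P F m r al mm cc \<longleftrightarrow> 1 \<le> r \<and> m = mm 1 \<and>
     (\<forall>c. P (0, c) = F (0, c)) \<and>
     (\<forall>i c. r < i \<longrightarrow> P (i, c) = F (i, c)) \<and>
     (\<forall>i. 1 \<le> i \<longrightarrow> i \<le> r \<longrightarrow> 1 \<le> cc i \<and> P (i, cc i) = Some (mm i) \<and>
         (\<forall>c. c \<noteq> cc i \<longrightarrow> P (i, c) = F (i, c)) \<and>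
         (\<forall>c. 1 \<le> c \<longrightarrow> c < cc i \<longrightarrow> (\<exists>v. F (i, c) = Some v \<and> v < mm i)) \<and>
         (\<forall>v. F (i, cc i) = Some v \<longrightarrow> mm i \<le> v)) \<and>
     (\<forall>i. 1 \<le> i \<longrightarrow> i < r \<longrightarrow> mm i < mm (Suc i) \<and> mid_ok P F i (cc i) (mm i) (mm (Suc i))) \<and>
     end_ok P F r (cc r) (mm r) al"

lemma certD:
  assumes "cert P F m r al mm cc"
  shows "1 \<le> r" "m = mm 1" "\<And>c. P (0, c) = F (0, c)" "\<And>i c. r < i \<Longrightarrow> P (i, c) = F (i, c)"
    "\<And>i. 1 \<le> i \<Longrightarrow> i \<le> r \<Longrightarrow> 1 \<le> cc i"
    "\<And>i. 1 \<le> i \<Longrightarrow> i \<le> r \<Longrightarrow> P (i, cc i) = Some (mm i)"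
    "\<And>i c. 1 \<le> i \<Longrightarrow> i \<le> r \<Longrightarrow> c \<noteq> cc i \<Longrightarrow> P (i, c) = F (i, c)"
    "\<And>i. 1 \<le> i \<Longrightarrow> i \<le> r \<Longrightarrow> \<forall>c. 1 \<le> c \<longrightarrow> c < cc i \<longrightarrow> (\<exists>v. F (i, c) = Some v \<and> v < mm i)"
    "\<And>i. 1 \<le> i \<Longrightarrow> i \<le> r \<Longrightarrow> \<forall>v. F (i, cc i) = Some v \<longrightarrow> mm i \<le> v"
    "\<And>i. 1 \<le> i \<Longrightarrow> i < r \<Longrightarrow> mm i < mm (Suc i)"
    "\<And>i. 1 \<le> i \<Longrightarrow> i < r \<Longrightarrow> mid_ok P F i (cc i) (mm i) (mm (Suc i))"
    "end_ok P F r (cc r) (mm r) al"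
  using assms unfolding cert_def by blast+

lemma ejectable_in_row: "ejectable P k x \<Longrightarrow> x \<in> row P k"
  by (induction rule: ejectable.induct) auto

lemma nxt_ok_unique:
  assumes "nxt_ok P F i ci y a" "nxt_ok P F i ci y b" shows "a = b"
proof -
  have A: "y < a" "P (i, Suc ci) = Some a \<or> ejectable F (Suc i) a"
    "\<And>z. y < z \<Longrightarrow> z < a \<Longrightarrow> \<not> ejectable F (Suc i) z" "\<And>w. P (i, Suc ci) = Some w \<Longrightarrow> a \<le> w"
    using assms(1) unfolding nxt_ok_def by auto
  have B: "y < b" "P (i, Suc ci) = Some b \<or> ejectable F (Suc i) b"
    "\<And>z. y < z \<Longrightarrow> z < b \<Longrightarrow> \<not> ejectable F (Suc i) z" "\<And>w. P (i, Suc ci) = Some w \<Longrightarrow> b \<le> w"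
    using assms(2) unfolding nxt_ok_def by auto
  show ?thesis
  proof (rule ccontr)
    assume "a \<noteq> b"
    then consider "a < b" | "b < a" by linarith
    then show False
    proof cases
      case 1
      then have "\<not> ejectable F (Suc i) a" using A(1) B(3) by blast
      then have "P (i, Suc ci) = Some a" using A(2) by blast
      then have "b \<le> a" using B(4) by blast
      then show False using 1 by simp
    next
      case 2
      then have "\<not> ejectable F (Suc i) b" using B(1) A(3) by blast
      then have "P (i, Suc ci) = Some b" using B(2) by blast
      then have "a \<le> b" using A(4) by blast
      then show False using 2 by simp
    qed
  qed
qed

lemma mid_ok_unique:
  assumes "mid_ok P F i ci mi a" "mid_ok P F i ci mi b" shows "a = b"
proof -
  obtain y where y: "F (i, ci) = Some y" using assms(1) unfolding mid_ok_def by auto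
  show ?thesis
  proof (cases "mi + 1 \<in> row P i")
    case True then show ?thesis using assms unfolding mid_ok_def by auto
  next
    case False
    show ?thesis
    proof (cases "mi < y \<and> \<not> ejectable F (Suc i) y")
      case True then show ?thesis using assms False y unfolding mid_ok_def by auto
    next
      case c2: False
      have "nxt_ok P F i ci y a" "nxt_ok P F i ci y b" using assms False c2 y unfolding mid_ok_def by auto
      then show ?thesis using nxt_ok_unique by blast
    qed
  qed
qed

lemma row_cong: "(\<And>c. P1 (i, c) = P2 (i, c)) \<Longrightarrow> row P1 i = row P2 i"
  unfolding row_def by simp

lemma mid_ok_cong:
  assumes "\<And>c. P1 (i, c) = P2 (i, c)" shows "mid_ok P1 F i ci mi m' = mid_ok P2 F i ci mi m'"
proof -
  have r: "row P1 i = row P2 i" using row_cong[of P1 i P2] assms by blast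
  have e: "P1 (i, Suc ci) = P2 (i, Suc ci)" using assms by blast
  show ?thesis by (simp only: mid_ok_def nxt_ok_def r e)
qed

lemma cc_unique:
  fixes F :: tab and m c1 c2 i :: nat
  assumes "1 \<le> c1" "1 \<le> c2"
    and "\<forall>c. 1 \<le> c \<longrightarrow> c < c1 \<longrightarrow> (\<exists>v. F (i, c) = Some v \<and> v < m)"
    and "\<forall>v. F (i, c1) = Some v \<longrightarrow> m \<le> v"
    and "\<forall>c. 1 \<le> c \<longrightarrow> c < c2 \<longrightarrow> (\<exists>v. F (i, c) = Some v \<and> v < m)"
    and "\<forall>v. F (i, c2) = Some v \<longrightarrow> m \<le> v"
  shows "c1 = c2"
proof -
  have "\<not> c1 < c2"
  proof
    assume h: "c1 < c2"
    obtain v where "F (i, c1) = Some v" "v < m" using assms(1,5) h by blast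
    then show False using assms(4) by fastforce
  qed
  moreover have "\<not> c2 < c1"
  proof
    assume h: "c2 < c1"
    obtain v where "F (i, c2) = Some v" "v < m" using assms(2,3) h by blast
    then show False using assms(6) by fastforce
  qed
  ultimately show ?thesis by simp
qed

lemma cert_inj_path:
  assumes c1: "cert P1 F m r1 a1 mm1 cc1" and c2: "cert P2 F m r2 a2 mm2 cc2"
  shows "\<forall>i. 1 \<le> i \<longrightarrow> i \<le> r1 \<longrightarrow> i \<le> r2 \<longrightarrow> mm1 i = mm2 i \<and> cc1 i = cc2 i"
proof (intro allI impI)
  fix i assume "1 \<le> i" "i \<le> r1" "i \<le> r2"
  then show "mm1 i = mm2 i \<and> cc1 i = cc2 i"
  proof (induction i rule: dec_induct)
    case base
    have m: "mm1 1 = mm2 1" using certD(2)[OF c1] certD(2)[OF c2] by simp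
    have r: "1 \<le> r1" "1 \<le> r2" using certD(1)[OF c1] certD(1)[OF c2] by auto
    show ?case
      apply (intro conjI m cc_unique[of "cc1 1" "cc2 1" F 1 "mm1 1"])
      using certD(5,8,9)[OF c1 _ r(1)] certD(5,8,9)[OF c2 _ r(2)] m by auto
  next
    case (step k)
    have k1: "1 \<le> k" "k < r1" "k < r2" using step by auto
    have IH: "mm1 k = mm2 k" "cc1 k = cc2 k" using step by auto
    have rowsame: "\<And>c. P1 (k, c) = P2 (k, c)"
    proof -
      fix c show "P1 (k, c) = P2 (k, c)"
      proof (cases "c = cc1 k")
        case True then show ?thesis using certD(6)[OF c1, of k] certD(6)[OF c2, of k] k1 IH by simp
      next
        case False then show ?thesis using certD(7)[OF c1, of k c] certD(7)[OF c2, of k c] k1 IH by simp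
      qed
    qed
    have mo1: "mid_ok P1 F k (cc1 k) (mm1 k) (mm1 (Suc k))" using certD(11)[OF c1] k1 by auto
    have mo2: "mid_ok P2 F k (cc2 k) (mm2 k) (mm2 (Suc k))" using certD(11)[OF c2] k1 by auto
    have mo2': "mid_ok P1 F k (cc1 k) (mm1 k) (mm2 (Suc k))"
      using mo2 IH mid_ok_cong[of P1 k P2, OF rowsame] by simp
    have M: "mm1 (Suc k) = mm2 (Suc k)" using mid_ok_unique[OF mo1 mo2'] .
    have s: "1 \<le> Suc k" "Suc k \<le> r1" "Suc k \<le> r2" using step by auto
    show ?case
      apply (intro conjI M cc_unique[of "cc1 (Suc k)" "cc2 (Suc k)" F "Suc k" "mm1 (Suc k)"])
      using certD(5,8,9)[OF c1 s(1,2)] certD(5,8,9)[OF c2 s(1,3)] M by auto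
  qed
qed

lemma end_mid_contra:
  assumes "end_ok P F r cr mr al" "mid_ok P F r cr mr m'" shows False
proof (cases al)
  case True then show False using assms unfolding end_ok_def mid_ok_def by auto
next
  case False
  then obtain y where y: "F (r, cr) = Some y" "mr \<le> y" "y = mr \<or> ejectable F (Suc r) y"
     "\<forall>z. y < z \<longrightarrow> \<not> ejectable F (Suc r) z" "mr + 1 \<notin> row P r" "P (r, Suc cr) = None"
    using assms(1) unfolding end_ok_def by auto
  have "nxt_ok P F r cr y m'"
    using assms(2) y unfolding mid_ok_def by auto
  then show False using y unfolding nxt_ok_def by auto
qed

lemma cert_inj:
  assumes c1: "cert P1 F m r1 a1 mm1 cc1" and c2: "cert P2 F m r2 a2 mm2 cc2"
  shows "P1 = P2"
proof -
  note path = cert_inj_path[OF c1 c2]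
  have rowsame: "\<And>k c. 1 \<le> k \<Longrightarrow> k \<le> r1 \<Longrightarrow> k \<le> r2 \<Longrightarrow> P1 (k, c) = P2 (k, c)"
  proof -
    fix k c assume k: "1 \<le> k" "k \<le> r1" "k \<le> r2"
    then have IH: "mm1 k = mm2 k" "cc1 k = cc2 k" using path by auto
    show "P1 (k, c) = P2 (k, c)"
    proof (cases "c = cc1 k")
      case True then show ?thesis using certD(6)[OF c1, of k] certD(6)[OF c2, of k] k IH by simp
    next
      case False then show ?thesis using certD(7)[OF c1, of k c] certD(7)[OF c2, of k c] k IH by simp
    qed
  qed
  have rr: "r1 = r2"
  proof (rule ccontr)
    assume "r1 \<noteq> r2"
    then consider "r1 < r2" | "r2 < r1" by linarith
    then show False
    proof cases
      case 1
      have "1 \<le> r1" using certD(1)[OF c1] by auto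
      with 1 path have e: "mm1 r1 = mm2 r1" "cc1 r1 = cc2 r1" by auto
      have rs: "\<And>c. P1 (r1, c) = P2 (r1, c)" using rowsame `1 \<le> r1` 1 by auto
      then have rs': "row P1 r1 = row P2 r1" unfolding row_def by simp
      have eo: "end_ok P1 F r1 (cc1 r1) (mm1 r1) a1" using certD(12)[OF c1] by auto
      have "mid_ok P2 F r1 (cc2 r1) (mm2 r1) (mm2 (Suc r1))" using certD(11)[OF c2] 1 `1 \<le> r1` by auto
      then have "mid_ok P1 F r1 (cc1 r1) (mm1 r1) (mm2 (Suc r1))"
        using e mid_ok_cong[of P1 r1 P2, OF rs] by simp
      then show False using end_mid_contra eo by blast
    next
      case 2
      have "1 \<le> r2" using certD(1)[OF c2] by auto
      with 2 path have e: "mm1 r2 = mm2 r2" "cc1 r2 = cc2 r2" by auto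
      have rs: "\<And>c. P1 (r2, c) = P2 (r2, c)" using rowsame `1 \<le> r2` 2 by auto
      then have rs': "row P1 r2 = row P2 r2" unfolding row_def by simp
      have eo: "end_ok P2 F r2 (cc2 r2) (mm2 r2) a2" using certD(12)[OF c2] by auto
      have "mid_ok P1 F r2 (cc1 r2) (mm1 r2) (mm1 (Suc r2))" using certD(11)[OF c1] 2 `1 \<le> r2` by auto
      then have "mid_ok P2 F r2 (cc2 r2) (mm2 r2) (mm1 (Suc r2))"
        using e mid_ok_cong[of P1 r2 P2, OF rs] by simp
      then show False using end_mid_contra eo by blast
    qed
  qed
  show ?thesis
  proof (rule ext)
    fix x :: "nat \<times> nat"
    obtain k c where x: "x = (k, c)" by (cases x)
    consider "k = 0" | "1 \<le> k" "k \<le> r1" | "r1 < k" by linarith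
    then show "P1 x = P2 x"
    proof cases
      case 1 then show ?thesis using certD(3)[OF c1] certD(3)[OF c2] x by auto
    next
      case 2 then show ?thesis using rowsame rr x by auto
    next
      case 3 then show ?thesis using certD(4)[OF c1] certD(4)[OF c2] x rr by auto
    qed
  qed
qed



lemma restrict_le_Some: "restrict_le N P x = Some v \<longleftrightarrow> P x = Some v \<and> int v \<le> N"
  unfolding restrict_le_def by (cases "P x") auto

lemma restrict_le_None: "restrict_le N P x = None \<longleftrightarrow> (\<forall>v. P x = Some v \<longrightarrow> N < int v)"
  unfolding restrict_le_def by (cases "P x") auto

lemma restrict_le_eq: "P x = Q x \<Longrightarrow> restrict_le N P x = restrict_le N Q x"
  unfolding restrict_le_def by simp

lemma restrict_le_empty: "restrict_le N Map.empty = Map.empty"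
  unfolding restrict_le_def by (rule ext) simp

lemma row_restrict: "x \<in> row (restrict_le N P) k \<longleftrightarrow> x \<in> row P k \<and> int x \<le> N"
  unfolding row_def by (auto simp: restrict_le_Some)

lemma row_ran: "x \<in> row P k \<Longrightarrow> x \<in> ran P"
  unfolding row_def ran_def by auto

lemma ej_restrict1:
  assumes "ejectable (restrict_le N P) k x" "N \<notin> int ` ran P"
  shows "ejectable P k x"
  using assms
proof (induction "restrict_le N P" k x rule: ejectable.induct)
  case (ej_stop x k)
  have "x + 1 \<notin> row P k"
  proof
    assume h: "x + 1 \<in> row P k"
    have "x \<in> row P k" "int x \<le> N" using ej_stop(1) row_restrict by blast+
    moreover have "int (x+1) \<noteq> N" using h row_ran ej_stop(3) by (metis image_eqI)
    moreover have "int x \<noteq> N" using calculation(1) row_ran ej_stop(3) by (metis image_eqI)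
    ultimately have "int (x + 1) \<le> N" by linarith
    then show False using h ej_stop(2) row_restrict by blast
  qed
  then show ?case using ej_stop row_restrict ejectable.ej_stop by blast
next
  case (ej_step x k)
  then show ?case using row_restrict ejectable.ej_step by blast
qed

lemma ej_restrict2:
  assumes "ejectable P k x" "int x < N" "N \<notin> int ` ran P"
  shows "ejectable (restrict_le N P) k x"
  using assms
proof (induction P k x rule: ejectable.induct)
  case (ej_stop x P k)
  then show ?case using row_restrict ejectable.ej_stop by (metis less_le)
next
  case (ej_step x P k)
  have "int (x+1) \<noteq> N" using ej_step(2) row_ran ej_step(6) by (metis image_eqI)
  then have lt: "int (x + 1) < N" using ej_step(5) by linarith
  then have "ejectable (restrict_le N P) (k + 1) (x + 1)" using ej_step by blast
  moreover have "x + 1 \<in> row (restrict_le N P) k" using ej_step(2) lt row_restrict by auto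
  moreover have "x \<in> row (restrict_le N P) k" using ej_step(1) lt row_restrict by auto
  ultimately show ?case using ejectable.ej_step by blast
qed

lemma ej_restrict:
  assumes "int x < N" "N \<notin> int ` ran P"
  shows "ejectable (restrict_le N P) k x \<longleftrightarrow> ejectable P k x"
  using ej_restrict1 ej_restrict2 assms by blast

lemma ej_restrict_le:
  assumes "ejectable (restrict_le N P) k x" "N \<notin> int ` ran P"
  shows "int x < N"
proof -
  have "x \<in> row P k" "int x \<le> N" using ejectable_in_row[OF assms(1)] row_restrict by blast+
  moreover have "int x \<noteq> N" using calculation(1) row_ran assms(2) by (metis image_eqI)
  ultimately show ?thesis by linarith
qed

lemma cert_mono:
  assumes "cert P F m r al mm cc" "1 \<le> i" "i \<le> j" "j \<le> r"
  shows "mm i \<le> mm j"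
  using assms(3,4)
proof (induction j rule: dec_induct)
  case base then show ?case by simp
next
  case (step n)
  then have "mm n < mm (Suc n)" using certD(10)[OF assms(1)] assms(2) by auto
  then show ?case using step by simp
qed

lemma cert_mm_ran:
  assumes c: "cert P F m r al mm cc" "1 \<le> i" "i \<le> r"
  shows "mm i \<in> ran F \<or> mm i = m"
  using assms(2,3)
proof (induction i rule: dec_induct)
  case base then show ?case using certD(2)[OF c(1)] by simp
next
  case (step k)
  have k: "1 \<le> k" "k < r" using step assms(2) by auto
  have mo: "mid_ok P F k (cc k) (mm k) (mm (Suc k))" using certD(11)[OF c(1) k] .
  then obtain y where y: "F (k, cc k) = Some y" unfolding mid_ok_def by auto
  have Pk: "P (k, cc k) = Some (mm k)" using certD(6)[OF c(1)] k by simp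
  have oth: "\<And>c'. c' \<noteq> cc k \<Longrightarrow> P (k, c') = F (k, c')" using certD(7)[OF c(1)] k by simp
  show ?case
  proof (cases "mm k + 1 \<in> row P k")
    case True
    then obtain c' where c': "P (k, c') = Some (mm k + 1)" unfolding row_def by auto
    then have "c' \<noteq> cc k" using Pk by auto
    then have "F (k, c') = Some (mm k + 1)" using oth c' by simp
    moreover have "mm (Suc k) = mm k + 1" using mo True unfolding mid_ok_def by auto
    ultimately show ?thesis unfolding ran_def by auto
  next
    case False
    show ?thesis
    proof (cases "mm k < y \<and> \<not> ejectable F (Suc k) y")
      case True
      then have "mm (Suc k) = y" using mo False y unfolding mid_ok_def by auto
      then show ?thesis using y unfolding ran_def by auto
    next
      case F2: False
      then have "nxt_ok P F k (cc k) y (mm (Suc k))" using mo False y unfolding mid_ok_def by auto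
      then have "P (k, Suc (cc k)) = Some (mm (Suc k)) \<or> ejectable F (Suc k) (mm (Suc k))"
        unfolding nxt_ok_def by auto
      then show ?thesis
      proof
        assume "P (k, Suc (cc k)) = Some (mm (Suc k))"
        then have "F (k, Suc (cc k)) = Some (mm (Suc k))" using oth by simp
        then show ?thesis unfolding ran_def by auto
      next
        assume "ejectable F (Suc k) (mm (Suc k))"
        then show ?thesis using ejectable_in_row row_ran by blast
      qed
    qed
  qed
qed

lemma cert_ran:
  assumes c: "cert P F m r al mm cc"
  shows "ran P \<subseteq> insert m (ran F)"
proof
  fix v assume "v \<in> ran P"
  then obtain i j where ij: "P (i, j) = Some v" unfolding ran_def by auto
  consider "i = 0" | "r < i" | "1 \<le> i" "i \<le> r" by linarith
  then show "v \<in> insert m (ran F)"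
  proof cases
    case 1 then show ?thesis using certD(3)[OF c] ij unfolding ran_def by (metis (mono_tags) insertCI mem_Collect_eq)
  next
    case 2 then show ?thesis using certD(4)[OF c] ij unfolding ran_def by (metis (mono_tags) insertCI mem_Collect_eq)
  next
    case 3
    show ?thesis
    proof (cases "j = cc i")
      case True
      then have "v = mm i" using certD(6)[OF c 3] ij by simp
      then show ?thesis using cert_mm_ran[OF c 3] by auto
    next
      case False
      then have "F (i, j) = Some v" using certD(7)[OF c 3] ij by simp
      then show ?thesis unfolding ran_def by auto
    qed
  qed
qed



lemma mid_ok_y_le:
  assumes "mid_ok P F i ci mi m'" "mi < m'"
  shows "\<exists>y. F (i, ci) = Some y \<and> mi \<le> y \<and> y \<le> m'"
  using assms unfolding mid_ok_def nxt_ok_def by (auto split: if_splits)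

lemma mid_ok_restrict:
  assumes mo: "mid_ok P F i ci mi m'" and lt: "mi < m'" "int m' < N"
    and nP: "N \<notin> int ` ran P" and nF: "N \<notin> int ` ran F"
  shows "mid_ok (restrict_le N P) (restrict_le N F) i ci mi m'"
proof -
  obtain y where y: "F (i, ci) = Some y" "mi \<le> y" "y \<le> m'" using mid_ok_y_le[OF mo lt(1)] by auto
  have yN: "int y < N" using y lt by linarith
  have ry: "restrict_le N F (i, ci) = Some y" using y yN restrict_le_Some by fastforce
  have ejy: "ejectable (restrict_le N F) (Suc i) y \<longleftrightarrow> ejectable F (Suc i) y"
    using ej_restrict[OF yN nF] by simp
  have rowm: "mi + 1 \<in> row (restrict_le N P) i \<longleftrightarrow> mi + 1 \<in> row P i"
    using row_restrict lt by auto
  show ?thesis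
  proof (cases "mi + 1 \<in> row P i")
    case True
    then show ?thesis using mo rowm ry y unfolding mid_ok_def by auto
  next
    case False
    show ?thesis
    proof (cases "mi < y \<and> \<not> ejectable F (Suc i) y")
      case True
      then have "m' = y \<and> m' \<notin> row P i" using mo False y unfolding mid_ok_def by auto
      then show ?thesis using True False rowm ry y ejy row_restrict unfolding mid_ok_def by auto
    next
      case F2: False
      then have nx: "nxt_ok P F i ci y m'" using mo False y unfolding mid_ok_def by auto
      have "nxt_ok (restrict_le N P) (restrict_le N F) i ci y m'"
        unfolding nxt_ok_def
      proof (intro conjI allI impI)
        show "y < m'" using nx unfolding nxt_ok_def by auto
        have "P (i, Suc ci) = Some m' \<or> ejectable F (Suc i) m'" using nx unfolding nxt_ok_def by auto
        then show "restrict_le N P (i, Suc ci) = Some m' \<or> ejectable (restrict_le N F) (Suc i) m'"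
          using lt(2) ej_restrict[OF lt(2) nF] restrict_le_Some by auto
      next
        fix z assume z: "y < z" "z < m'"
        show "\<not> ejectable (restrict_le N F) (Suc i) z"
        proof
          assume "ejectable (restrict_le N F) (Suc i) z"
          then have "ejectable F (Suc i) z" using ej_restrict1 nF by blast
          then show False using nx z unfolding nxt_ok_def by auto
        qed
      next
        fix w assume "restrict_le N P (i, Suc ci) = Some w"
        then have "P (i, Suc ci) = Some w" using restrict_le_Some by blast
        then show "m' \<le> w" using nx unfolding nxt_ok_def by auto
      qed
      then show ?thesis using False F2 rowm ry y ejy unfolding mid_ok_def by auto
    qed
  qed
qed

lemma cert_restrict_big:
  assumes c: "cert P F m r al mm cc" and mN: "N < int m"
  shows "restrict_le N P = restrict_le N F"
proof (rule ext)
  fix x :: "nat \<times> nat"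
  obtain i j where x: "x = (i, j)" by (cases x)
  consider "i = 0" | "r < i" | "1 \<le> i" "i \<le> r" by linarith
  then show "restrict_le N P x = restrict_le N F x"
  proof cases
    case 1 then show ?thesis using certD(3)[OF c] x restrict_le_eq by metis
  next
    case 2 then show ?thesis using certD(4)[OF c] x restrict_le_eq by metis
  next
    case 3
    show ?thesis
    proof (cases "j = cc i")
      case True
      have "m \<le> mm i" using cert_mono[OF c _ 3(1) 3(2)] certD(2)[OF c] by simp
      then have "N < int (mm i)" using mN by linarith
      moreover have "P (i, j) = Some (mm i)" using certD(6)[OF c 3] True by simp
      moreover have "\<forall>v. F (i, j) = Some v \<longrightarrow> mm i \<le> v" using certD(9)[OF c 3] True by simp
      ultimately have "restrict_le N P x = None" "restrict_le N F x = None"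
        using x restrict_le_None by fastforce+
      then show ?thesis by simp
    next
      case False
      then show ?thesis using certD(7)[OF c 3] x restrict_le_eq by metis
    qed
  qed
qed

lemma ran_notN: "N \<notin> int ` ran P \<Longrightarrow> P x = Some v \<Longrightarrow> int v \<noteq> N"
  unfolding ran_def by force

lemma cert_restrict_small:
  assumes c: "cert P F m r al mm cc" and mN: "int m < N"
    and nP: "N \<notin> int ` ran P" and nF: "N \<notin> int ` ran F"
  shows "\<exists>r' al'. cert (restrict_le N P) (restrict_le N F) m r' al' mm cc"
proof -
  define k where "k = (GREATEST i. i \<le> r \<and> int (mm i) < N)"
  have r1: "1 \<le> r" using certD(1)[OF c] .
  have m1: "m = mm 1" using certD(2)[OF c] .
  have kex: "1 \<le> r \<and> int (mm 1) < N" using r1 m1 mN by simp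
  have kprop: "k \<le> r \<and> int (mm k) < N"
    unfolding k_def by (rule GreatestI_nat[of _ 1 r]) (use kex in auto)
  have kge: "1 \<le> k" unfolding k_def by (rule Greatest_le_nat[of _ 1 r]) (use kex in auto)
  have above: "\<And>i. k < i \<Longrightarrow> i \<le> r \<Longrightarrow> N \<le> int (mm i)"
  proof -
    fix i assume "k < i" "i \<le> r"
    then have "\<not> (i \<le> r \<and> int (mm i) < N)"
      using Greatest_le_nat[of "\<lambda>i. i \<le> r \<and> int (mm i) < N" i r] unfolding k_def[symmetric] by auto
    then show "N \<le> int (mm i)" using `i \<le> r` by simp
  qed
  have mmran: "\<And>i. 1 \<le> i \<Longrightarrow> i \<le> r \<Longrightarrow> int (mm i) \<noteq> N"
    using certD(6)[OF c] ran_notN[OF nP] by blast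
  have above': "\<And>i. k < i \<Longrightarrow> i \<le> r \<Longrightarrow> N < int (mm i)"
    using above mmran kge by (metis le_less_trans less_imp_le_nat le_neq_trans less_le_not_le order.not_eq_order_implies_strict linorder_not_less)
  have below: "\<And>i. 1 \<le> i \<Longrightarrow> i \<le> k \<Longrightarrow> int (mm i) < N"
    using cert_mono[OF c] kprop by (meson le_trans of_nat_le_iff order_le_less_trans)
  define al' where "al' = (restrict_le N F (k, cc k) = None)"
  have "cert (restrict_le N P) (restrict_le N F) m k al' mm cc"
    unfolding cert_def
  proof (intro conjI allI impI)
    show "1 \<le> k" by (rule kge)
    show "m = mm 1" by (rule m1)
  next
    fix c' show "restrict_le N P (0, c') = restrict_le N F (0, c')"
      using certD(3)[OF c] restrict_le_eq by metis
  next
    fix i c' assume ik: "k < i"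
    show "restrict_le N P (i, c') = restrict_le N F (i, c')"
    proof (cases "r < i")
      case True then show ?thesis using certD(4)[OF c] restrict_le_eq by metis
    next
      case False
      then have ir: "1 \<le> i" "i \<le> r" using ik kge by auto
      show ?thesis
      proof (cases "c' = cc i")
        case True
        have "N < int (mm i)" using above' ik ir by simp
        moreover have "P (i, c') = Some (mm i)" using certD(6)[OF c ir] True by simp
        moreover have "\<forall>v. F (i, c') = Some v \<longrightarrow> mm i \<le> v" using certD(9)[OF c ir] True by simp
        ultimately have "restrict_le N P (i, c') = None" "restrict_le N F (i, c') = None"
          using restrict_le_None by fastforce+
        then show ?thesis by simp
      next
        case False then show ?thesis using certD(7)[OF c ir] restrict_le_eq by metis
      qed
    qed
  next
    fix i assume i: "1 \<le> i" "i \<le> k"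
    then have ir: "1 \<le> i" "i \<le> r" using kprop by auto
    show "1 \<le> cc i" using certD(5)[OF c ir] .
  next
    fix i assume i: "1 \<le> i" "i \<le> k"
    then have ir: "1 \<le> i" "i \<le> r" using kprop by auto
    have lt: "int (mm i) < N" using below i by simp
    show "restrict_le N P (i, cc i) = Some (mm i)" using certD(6)[OF c ir] lt restrict_le_Some by simp
  next
    fix i c' assume i: "1 \<le> i" "i \<le> k" "c' \<noteq> cc i"
    then have ir: "1 \<le> i" "i \<le> r" using kprop by auto
    show "restrict_le N P (i, c') = restrict_le N F (i, c')"
      using certD(7)[OF c ir i(3)] restrict_le_eq by metis
  next
    fix i c' assume i: "1 \<le> i" "i \<le> k" "1 \<le> c'" "c' < cc i"
    then have ir: "1 \<le> i" "i \<le> r" using kprop by auto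
    have lt: "int (mm i) < N" using below i by simp
    obtain v where "F (i, c') = Some v" "v < mm i" using certD(8)[OF c ir] i by blast
    then show "\<exists>v. restrict_le N F (i, c') = Some v \<and> v < mm i" using lt restrict_le_Some by auto
  next
    fix i v assume i: "1 \<le> i" "i \<le> k" "restrict_le N F (i, cc i) = Some v"
    then have ir: "1 \<le> i" "i \<le> r" using kprop by auto
    show "mm i \<le> v" using certD(9)[OF c ir] restrict_le_Some i(3) by blast
  next
    fix i assume i: "1 \<le> i" "i < k"
    then have ir: "1 \<le> i" "i < r" using kprop by auto
    show "mm i < mm (Suc i)" using certD(10)[OF c ir] .
  next
    fix i assume i: "1 \<le> i" "i < k"
    then have ir: "1 \<le> i" "i < r" using kprop by auto
    show "mid_ok (restrict_le N P) (restrict_le N F) i (cc i) (mm i) (mm (Suc i))"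
      using mid_ok_restrict[OF certD(11)[OF c ir] certD(10)[OF c ir] below[of "Suc i"] nP nF] i by simp
  next
    show "end_ok (restrict_le N P) (restrict_le N F) k (cc k) (mm k) al'"
    proof (cases al')
      case True then show ?thesis unfolding end_ok_def al'_def by simp
    next
      case False
      then obtain y where ry: "restrict_le N F (k, cc k) = Some y" unfolding al'_def by auto
      then have y: "F (k, cc k) = Some y" "int y \<le> N" using restrict_le_Some by auto
      have yN: "int y < N" using y ran_notN[OF nF] by fastforce
      have ejy: "ejectable (restrict_le N F) (Suc k) y \<longleftrightarrow> ejectable F (Suc k) y"
        using ej_restrict[OF yN nF] by simp
      have kr: "1 \<le> k" "k \<le> r" using kge kprop by auto
      have mky: "mm k \<le> y" using certD(9)[OF c kr] y by simp
      have noz: "\<forall>z. y < z \<longrightarrow> \<not> ejectable (restrict_le N F) (Suc k) z"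
        and conds: "y = mm k \<or> ejectable F (Suc k) y" "mm k + 1 \<notin> row P k" "\<forall>w. P (k, Suc (cc k)) = Some w \<longrightarrow> N < int w"
      proof -
        have "(\<forall>z. y < z \<longrightarrow> \<not> ejectable F (Suc k) z \<or> N < int z) \<and> (y = mm k \<or> ejectable F (Suc k) y) \<and>
           mm k + 1 \<notin> row P k \<and> (\<forall>w. P (k, Suc (cc k)) = Some w \<longrightarrow> N < int w)"
        proof (cases "k < r")
          case True
          have mo: "mid_ok P F k (cc k) (mm k) (mm (Suc k))" using certD(11)[OF c kr(1) True] .
          have Nm: "N < int (mm (Suc k))" using above' True by simp
          have nD: "mm k + 1 \<notin> row P k"
          proof
            assume "mm k + 1 \<in> row P k"
            then have "mm (Suc k) = mm k + 1" using mo unfolding mid_ok_def by auto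
            then show False using Nm below[OF kr(1) order.refl] by simp
          qed
          have nI: "\<not> (mm k < y \<and> \<not> ejectable F (Suc k) y)"
          proof
            assume "mm k < y \<and> \<not> ejectable F (Suc k) y"
            then have "mm (Suc k) = y" using mo nD y unfolding mid_ok_def by auto
            then show False using Nm yN by simp
          qed
          have nx: "nxt_ok P F k (cc k) y (mm (Suc k))" using mo nD nI y unfolding mid_ok_def by auto
          show ?thesis
          proof (intro conjI allI impI)
            fix z assume "y < z"
            show "\<not> ejectable F (Suc k) z \<or> N < int z"
            proof (cases "z < mm (Suc k)")
              case True then show ?thesis using nx `y < z` unfolding nxt_ok_def by auto
            next
              case False then show ?thesis using Nm by simp
            qed
          next
            show "y = mm k \<or> ejectable F (Suc k) y" using nI mky by auto
            show "mm k + 1 \<notin> row P k" by (rule nD)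
          next
            fix w assume "P (k, Suc (cc k)) = Some w"
            then have "mm (Suc k) \<le> w" using nx unfolding nxt_ok_def by auto
            then show "N < int w" using Nm by simp
          qed
        next
          case False
          then have kr': "k = r" using kr by simp
          have eo: "end_ok P F r (cc r) (mm r) al" using certD(12)[OF c] .
          have nal: "\<not> al" using eo y kr' unfolding end_ok_def by auto
          then show ?thesis using eo y kr' unfolding end_ok_def by auto
        qed
        then have H: "\<forall>z. y < z \<longrightarrow> \<not> ejectable F (Suc k) z \<or> N < int z"
          "y = mm k \<or> ejectable F (Suc k) y" "mm k + 1 \<notin> row P k" "\<forall>w. P (k, Suc (cc k)) = Some w \<longrightarrow> N < int w"
          by auto
        show "y = mm k \<or> ejectable F (Suc k) y" "mm k + 1 \<notin> row P k" "\<forall>w. P (k, Suc (cc k)) = Some w \<longrightarrow> N < int w"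
          using H by auto
        show "\<forall>z. y < z \<longrightarrow> \<not> ejectable (restrict_le N F) (Suc k) z"
        proof (intro allI impI notI)
          fix z assume "y < z" "ejectable (restrict_le N F) (Suc k) z"
          then show False using H(1) ej_restrict1[OF _ nF] ej_restrict_le[OF _ nF] by force
        qed
      qed
      show ?thesis unfolding end_ok_def using False
        apply simp
        apply (rule exI[of _ y])
        using ry mky noz conds ejy row_restrict restrict_le_None by auto
    qed
  qed
  then show ?thesis by blast
qed

inductive chain :: "tab \<Rightarrow> nat list \<Rightarrow> bool" where
  chain_nil: "chain Map.empty []"
| chain_cons: "cert P F m r al mm cc \<Longrightarrow> chain F A \<Longrightarrow> chain P (m # A)"

lemma chain_ran: "chain P A \<Longrightarrow> ran P \<subseteq> set A"
proof (induction rule: chain.induct)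
  case chain_nil then show ?case by simp
next
  case (chain_cons P F m r al mm cc A)
  then show ?case using cert_ran[OF chain_cons(1)] by auto
qed

lemma chain_inj: "chain P1 A \<Longrightarrow> chain P2 A \<Longrightarrow> P1 = P2"
proof (induction P1 A arbitrary: P2 rule: chain.induct)
  case chain_nil then show ?case by (cases rule: chain.cases) auto
next
  case (chain_cons P F m r al mm cc A)
  note h1 = chain_cons.hyps(1)
  note IH = chain_cons.IH
  from chain_cons.prems obtain F2 r2 al2 mm2 cc2 where
    c2: "cert P2 F2 m r2 al2 mm2 cc2" "chain F2 A"
    by (cases rule: chain.cases) auto
  then have "F = F2" using IH by blast
  then show ?case using cert_inj h1 c2(1) by blast
qed

lemma chain_restrict:
  "chain P A \<Longrightarrow> N \<notin> int ` set A \<Longrightarrow> chain (restrict_le N P) (filter (\<lambda>x. int x \<le> N) A)"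
proof (induction rule: chain.induct)
  case chain_nil then show ?case using restrict_le_empty chain.chain_nil by simp
next
  case (chain_cons P F m r al mm cc A)
  have nP: "N \<notin> int ` ran P" using chain_ran[OF chain.chain_cons[OF chain_cons(1,2)]] chain_cons.prems by auto
  have nF: "N \<notin> int ` ran F" using chain_ran[OF chain_cons(2)] chain_cons.prems by auto
  have IH: "chain (restrict_le N F) (filter (\<lambda>x. int x \<le> N) A)" using chain_cons by simp
  have mN: "int m \<noteq> N" using chain_cons.prems by auto
  show ?case
  proof (cases "N < int m")
    case True
    then show ?thesis using cert_restrict_big[OF chain_cons(1) True] IH by simp
  next
    case False
    then have lt: "int m < N" using mN by simp
    obtain r' al' where "cert (restrict_le N P) (restrict_le N F) m r' al' mm cc"
      using cert_restrict_small[OF chain_cons(1) lt nP nF] by blast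
    then show ?thesis using IH lt chain.chain_cons by fastforce
  qed
qed



lemma inc_dom: "increasing_tableau P \<Longrightarrow> P (i, c) = Some v \<Longrightarrow> 1 \<le> i \<and> 1 \<le> c"
  unfolding increasing_tableau_def young_diagram_def by blast

lemma inc_finite: "increasing_tableau P \<Longrightarrow> finite (dom P)"
  unfolding increasing_tableau_def young_diagram_def by blast

lemma inc_pos: "increasing_tableau P \<Longrightarrow> P x = Some v \<Longrightarrow> 0 < v"
  unfolding increasing_tableau_def ran_def by blast

lemma inc_closed: "increasing_tableau P \<Longrightarrow> P (i, c) \<noteq> None \<Longrightarrow> 1 \<le> i' \<Longrightarrow> i' \<le> i \<Longrightarrow> 1 \<le> c' \<Longrightarrow> c' \<le> c
   \<Longrightarrow> P (i', c') \<noteq> None"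
  unfolding increasing_tableau_def young_diagram_def by blast

lemma inc_right: "increasing_tableau P \<Longrightarrow> P (i, c) = Some u \<Longrightarrow> P (i, c+1) = Some v \<Longrightarrow> u < v"
  unfolding increasing_tableau_def by blast

lemma inc_down: "increasing_tableau P \<Longrightarrow> P (i, c) = Some u \<Longrightarrow> P (i+1, c) = Some v \<Longrightarrow> u < v"
  unfolding increasing_tableau_def by blast

lemma inc_row_lt:
  assumes P: "increasing_tableau P" and u: "P (i, c) = Some u" and v: "P (i, c') = Some v" and lt: "c < c'"
  shows "u < v"
proof -
  have "Suc c \<le> c'" using lt by simp
  then show ?thesis using v
  proof (induction c' arbitrary: v rule: dec_induct)
  case base then show ?case using inc_right[OF P u] by simp
next
  case (step n)
  have "P (i, n) \<noteq> None"
    using inc_closed[OF P, of i "Suc n" i n] step inc_dom[OF P step(4)] by auto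
  then obtain w where w: "P (i, n) = Some w" by auto
  have "u < w" using step.IH[OF w] by simp
  moreover have "w < v" using inc_right[OF P w] step by simp
  ultimately show ?case by simp
qed
qed

lemma inc_col_lt:
  assumes P: "increasing_tableau P" and u: "P (i, c) = Some u" and v: "P (i', c) = Some v" and lt: "i < i'"
  shows "u < v"
proof -
  have "Suc i \<le> i'" using lt by simp
  then show ?thesis using v
  proof (induction i' arbitrary: v rule: dec_induct)
  case base then show ?case using inc_down[OF P u] by simp
next
  case (step n)
  have "P (n, c) \<noteq> None"
    using inc_closed[OF P, of "Suc n" c n c] step inc_dom[OF P step(4)] inc_dom[OF P u] by auto
  then obtain w where w: "P (n, c) = Some w" by auto
  have "u < w" using step.IH[OF w] by simp
  moreover have "w < v" using inc_down[OF P w] step by simp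
  ultimately show ?case by simp
qed
qed

lemma inc_row_le:
  assumes P: "increasing_tableau P" and u: "P (i, c) = Some u" and v: "P (i, c') = Some v" and lt: "c \<le> c'"
  shows "u \<le> v"
  using inc_row_lt[OF P u v] lt u v by (cases "c = c'") auto

lemma inc_row_inj:
  assumes P: "increasing_tableau P" and u: "P (i, c) = Some u" and v: "P (i, c') = Some u"
  shows "c = c'"
  using inc_row_lt[OF P u v] inc_row_lt[OF P v u] by (cases "c < c'"; cases "c' < c") auto

lemma inc_row_mono_rev:
  assumes P: "increasing_tableau P" and u: "P (i, c) = Some u" and v: "P (i, c') = Some v" and lt: "u < v"
  shows "c < c'"
  using inc_row_le[OF P v u] lt by (cases "c < c'") (auto simp: not_less)

lemma dom_bound:
  fixes P :: tab
  assumes "finite (dom P)"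
  shows "\<exists>B. \<forall>i c. P (i, c) \<noteq> None \<longrightarrow> c \<le> B"
proof -
  define B where "B = Max (snd ` dom P)"
  have "\<forall>i c. P (i, c) \<noteq> None \<longrightarrow> c \<le> B"
    unfolding B_def using assms by (auto intro!: Max_ge simp: dom_def image_iff) (metis snd_conv)
  then show ?thesis by blast
qed

lemma bcol_d_dom:
  assumes P: "increasing_tableau P" and rc: "P (r, c) \<noteq> None"
  shows "d < r \<Longrightarrow> P (r - d, bcol_d P r c d) \<noteq> None"
proof (induction d)
  case 0 then show ?case using rc by simp
next
  case (Suc d)
  define i where "i = r - Suc d"
  have ii: "r - d = Suc i" "1 \<le> i" using Suc.prems unfolding i_def by auto
  define pc where "pc = bcol_d P r c d"
  have prev: "P (Suc i, pc) \<noteq> None" using Suc ii unfolding pc_def by simp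
  then obtain w where w: "P (Suc i, pc) = Some w" by auto
  have "P (i, pc) \<noteq> None" using inc_closed[OF P prev, of i pc] ii inc_dom[OF P w] by auto
  then obtain v where v: "P (i, pc) = Some v" by auto
  have vw: "v < w" using inc_down[OF P v] w by simp
  define S where "S = (\<lambda>c'. \<exists>v w. P (i, c') = Some v \<and> P (Suc i, pc) = Some w \<and> v < w)"
  have Spc: "S pc" unfolding S_def using v w vw by blast
  obtain B where B: "\<forall>i c. P (i, c) \<noteq> None \<longrightarrow> c \<le> B" using dom_bound[OF inc_finite[OF P]] by blast
  have Sb: "\<And>y. S y \<Longrightarrow> y \<le> B" unfolding S_def using B by fastforce
  have "S (Greatest S)" by (rule GreatestI_nat[of S pc B, OF Spc Sb])
  moreover have "bcol_d P r c (Suc d) = Greatest S"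
    unfolding S_def pc_def i_def using ii(1) by (simp add: i_def)
  ultimately show ?case unfolding S_def i_def by auto
qed



lemma bcol_r: "bcol P r c r = c"
  unfolding bcol_def by simp

lemma bcol_greatest:
  assumes "i < r"
  shows "bcol P r c i = (GREATEST c'. \<exists>v w. P (i, c') = Some v \<and> P (Suc i, bcol P r c (Suc i)) = Some w \<and> v < w)"
proof -
  have e: "r - i = Suc (r - Suc i)" "r - Suc (r - Suc i) = i" "r - (r - Suc i) = Suc i" using assms by auto
  show ?thesis unfolding bcol_def e(1) bcol_d.simps(2) e(2) e(3) by simp
qed

lemma path_dom:
  assumes P: "increasing_tableau P" and rc: "P (r, c) \<noteq> None" and i: "1 \<le> i" "i \<le> r"
  shows "P (i, bcol P r c i) \<noteq> None"
  using bcol_d_dom[OF P rc, of "r - i"] i unfolding bcol_def by simp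

lemma path_facts:
  assumes P: "increasing_tableau P" and rc: "P (r, c) \<noteq> None" and i: "1 \<le> i" "i < r"
  defines "cc \<equiv> bcol P r c"
  shows "\<exists>v w. P (i, cc i) = Some v \<and> P (Suc i, cc (Suc i)) = Some w \<and> v < w"
    and "\<And>c' v w. P (i, c') = Some v \<Longrightarrow> P (Suc i, cc (Suc i)) = Some w \<Longrightarrow> v < w \<Longrightarrow> c' \<le> cc i"
    and "cc (Suc i) \<le> cc i"
proof -
  define S where "S = (\<lambda>c'. \<exists>v w. P (i, c') = Some v \<and> P (Suc i, cc (Suc i)) = Some w \<and> v < w)"
  have g: "cc i = Greatest S" unfolding S_def cc_def using bcol_greatest[OF i(2)] by simp
  have prev: "P (Suc i, cc (Suc i)) \<noteq> None" using path_dom[OF P rc, of "Suc i"] i unfolding cc_def by simp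
  then obtain w where w: "P (Suc i, cc (Suc i)) = Some w" by auto
  have "P (i, cc (Suc i)) \<noteq> None" using inc_closed[OF P prev, of i "cc (Suc i)"] i inc_dom[OF P w] by auto
  then obtain v where v: "P (i, cc (Suc i)) = Some v" by auto
  have Spc: "S (cc (Suc i))" unfolding S_def using v w inc_down[OF P v] w by auto
  obtain B where B: "\<forall>i c. P (i, c) \<noteq> None \<longrightarrow> c \<le> B" using dom_bound[OF inc_finite[OF P]] by blast
  have Sb: "\<And>y. S y \<Longrightarrow> y \<le> B" unfolding S_def using B by fastforce
  have "S (cc i)" unfolding g by (rule GreatestI_nat[of S "cc (Suc i)" B, OF Spc Sb])
  then show "\<exists>v w. P (i, cc i) = Some v \<and> P (Suc i, cc (Suc i)) = Some w \<and> v < w" unfolding S_def by blast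
  show "\<And>c' v w. P (i, c') = Some v \<Longrightarrow> P (Suc i, cc (Suc i)) = Some w \<Longrightarrow> v < w \<Longrightarrow> c' \<le> cc i"
  proof -
    fix c' v w assume "P (i, c') = Some v" "P (Suc i, cc (Suc i)) = Some w" "v < w"
    then have "S c'" unfolding S_def by blast
    then show "c' \<le> cc i" unfolding g by (rule Greatest_le_nat[of S c' B, OF _ Sb])
  qed
  show "cc (Suc i) \<le> cc i" unfolding g by (rule Greatest_le_nat[of S "cc (Suc i)" B, OF Spc Sb])
qed

definition pm :: "tab \<Rightarrow> nat \<Rightarrow> nat \<Rightarrow> nat \<Rightarrow> nat" where
  "pm P r c i = the (P (i, bcol P r c i))"

lemma pm_some:
  assumes P: "increasing_tableau P" and rc: "P (r, c) \<noteq> None" and i: "1 \<le> i" "i \<le> r"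
  shows "P (i, bcol P r c i) = Some (pm P r c i)"
  using path_dom[OF P rc i] unfolding pm_def by auto

lemma pcol_pos:
  assumes P: "increasing_tableau P" and rc: "P (r, c) \<noteq> None" and i: "1 \<le> i" "i \<le> r"
  shows "1 \<le> bcol P r c i"
  using inc_dom[OF P pm_some[OF P rc i]] by simp

lemma pm_lt:
  assumes P: "increasing_tableau P" and rc: "P (r, c) \<noteq> None" and i: "1 \<le> i" "i < r"
  shows "pm P r c i < pm P r c (Suc i)"
  using path_facts(1)[OF P rc i] pm_some[OF P rc, of i] pm_some[OF P rc, of "Suc i"] i by auto

lemma pm_greatest:
  assumes P: "increasing_tableau P" and rc: "P (r, c) \<noteq> None" and i: "1 \<le> i" "i < r"
    and v: "P (i, c') = Some v" "v < pm P r c (Suc i)"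
  shows "c' \<le> bcol P r c i"
  using path_facts(2)[OF P rc i v(1) pm_some[OF P rc, of "Suc i"]] v(2) i by auto

lemma pm_right:
  assumes P: "increasing_tableau P" and rc: "P (r, c) \<noteq> None" and i: "1 \<le> i" "i < r"
    and v: "P (i, c') = Some v" "bcol P r c i < c'"
  shows "pm P r c (Suc i) \<le> v"
  using pm_greatest[OF P rc i v(1)] v(2) by (cases "v < pm P r c (Suc i)") auto

lemma pcol_mono:
  assumes P: "increasing_tableau P" and rc: "P (r, c) \<noteq> None" and i: "1 \<le> i" "i < r"
  shows "bcol P r c (Suc i) \<le> bcol P r c i"
  using path_facts(3)[OF P rc i] by simp

lemma pm_in_row:
  assumes P: "increasing_tableau P" and rc: "P (r, c) \<noteq> None" and i: "1 \<le> i" "i < r"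
    and m: "pm P r c (Suc i) \<in> row P i"
  shows "P (i, Suc (bcol P r c i)) = Some (pm P r c (Suc i))"
proof -
  let ?ci = "bcol P r c i" and ?m = "pm P r c (Suc i)"
  obtain c' where c': "P (i, c') = Some ?m" using m unfolding row_def by auto
  have Pi: "P (i, ?ci) = Some (pm P r c i)" using pm_some[OF P rc] i by simp
  have lt: "pm P r c i < ?m" using pm_lt[OF P rc i] .
  have "?ci < c'" using inc_row_mono_rev[OF P Pi c' lt] .
  then have "P (i, Suc ?ci) \<noteq> None" using inc_closed[OF P, of i c' i "Suc ?ci"] c' i by auto
  then obtain v where v: "P (i, Suc ?ci) = Some v" by auto
  have "?m \<le> v" using pm_right[OF P rc i v] by simp
  moreover have "v \<le> ?m" using inc_row_le[OF P v c'] `?ci < c'` by simp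
  ultimately show ?thesis using v by simp
qed

lemma pm_D:
  assumes P: "increasing_tableau P" and rc: "P (r, c) \<noteq> None" and i: "1 \<le> i" "i < r"
    and m: "pm P r c i + 1 \<in> row P i"
  shows "pm P r c (Suc i) = pm P r c i + 1"
proof -
  let ?ci = "bcol P r c i"
  obtain c' where c': "P (i, c') = Some (pm P r c i + 1)" using m unfolding row_def by auto
  have Pi: "P (i, ?ci) = Some (pm P r c i)" using pm_some[OF P rc] i by simp
  have "?ci < c'" using inc_row_mono_rev[OF P Pi c'] by simp
  then have "pm P r c (Suc i) \<le> pm P r c i + 1" using pm_right[OF P rc i c'] by simp
  then show ?thesis using pm_lt[OF P rc i] by simp
qed

lemma outer_not_succ:
  assumes P: "increasing_tableau P" and rc: "P (r, c) = Some v" and out: "P (r, Suc c) = None"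
  shows "v + 1 \<notin> row P r"
proof
  assume "v + 1 \<in> row P r"
  then obtain c' where c': "P (r, c') = Some (v + 1)" unfolding row_def by auto
  have "c < c'" using inc_row_mono_rev[OF P rc c'] by simp
  then have "P (r, Suc c) \<noteq> None" using inc_closed[OF P, of r c' r "Suc c"] c' inc_dom[OF P rc] by auto
  then show False using out by simp
qed



lemma rloop_step_shape:
  "\<exists>P'' al'. rloop P r c (Suc j) P' al ub = rloop P r c j P'' al' (enat (the (P (Suc j, bcol P r c (Suc j))))) \<and>
     (\<forall>x. x \<noteq> (Suc j, bcol P r c (Suc j)) \<longrightarrow> P'' x = P' x)"
proof -
  define ci where "ci = bcol P r c (Suc j)"
  define mi where "mi = the (P (Suc j, ci))"
  define X where "X = {x. ejectable P' (Suc j + 1) x \<and> mi < x \<and> enat x < ub}"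
  have e: "rloop P r c (Suc j) P' al ub =
     (if mi + 1 \<in> row P (Suc j) then rloop P r c j P' al (enat mi)
      else if al \<and> ub \<noteq> \<infinity> \<and> the_enat ub \<notin> row P (Suc j)
        then rloop P r c j (P'((Suc j, ci) := Some (the_enat ub))) True (enat mi)
      else if X \<noteq> {} then rloop P r c j (P'((Suc j, ci) := Some (Max X))) True (enat mi)
      else rloop P r c j P' False (enat mi))"
    unfolding ci_def mi_def X_def by (simp only: rloop.simps Let_def)
  have g: "enat (the (P (Suc j, bcol P r c (Suc j)))) = enat mi" unfolding mi_def ci_def ..
  show ?thesis
  proof (cases "mi + 1 \<in> row P (Suc j)")
    case True
    then have eq: "rloop P r c (Suc j) P' al ub = rloop P r c j P' al (enat mi)" unfolding e using True by (simp only: if_True if_False simp_thms)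
    show ?thesis by (rule exI[of _ P'], rule exI[of _ al]) (simp del: rloop.simps add: eq g ci_def)
  next
    case F1: False
    show ?thesis
    proof (cases "al \<and> ub \<noteq> \<infinity> \<and> the_enat ub \<notin> row P (Suc j)")
      case True
      then have eq: "rloop P r c (Suc j) P' al ub = rloop P r c j (P'((Suc j, ci) := Some (the_enat ub))) True (enat mi)"
        unfolding e using F1 True by (simp only: if_True if_False simp_thms)
      show ?thesis by (rule exI[of _ "P'((Suc j, ci) := Some (the_enat ub))"], rule exI[of _ True]) (simp del: rloop.simps add: eq g ci_def)
    next
      case F2: False
      show ?thesis
      proof (cases "X \<noteq> {}")
        case True
        then have eq: "rloop P r c (Suc j) P' al ub = rloop P r c j (P'((Suc j, ci) := Some (Max X))) True (enat mi)"
          unfolding e using F1 F2 True by (simp only: if_True if_False simp_thms)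
        show ?thesis by (rule exI[of _ "P'((Suc j, ci) := Some (Max X))"], rule exI[of _ True]) (simp del: rloop.simps add: eq g ci_def)
      next
        case False
        then have eq: "rloop P r c (Suc j) P' al ub = rloop P r c j P' False (enat mi)"
          unfolding e using F1 F2 False by (simp only: if_True if_False simp_thms)
        show ?thesis by (rule exI[of _ P'], rule exI[of _ False]) (simp del: rloop.simps add: eq g ci_def)
      qed
    qed
  qed
qed

lemma rloop_rows_gt:
  "i = 0 \<or> n < i \<Longrightarrow> rloop P r c n P' al ub (i, c') = P' (i, c')"
proof (induction n arbitrary: P' al ub)
  case 0 then show ?case by simp
next
  case (Suc j)
  have h: "i = 0 \<or> j < i" using Suc.prems by auto
  obtain P'' al' where s: "rloop P r c (Suc j) P' al ub = rloop P r c j P'' al' (enat (the (P (Suc j, bcol P r c (Suc j)))))"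
    "\<forall>x. x \<noteq> (Suc j, bcol P r c (Suc j)) \<longrightarrow> P'' x = P' x" using rloop_step_shape by blast
  have ne: "(i, c') \<noteq> (Suc j, bcol P r c (Suc j))" using Suc.prems by auto
  show ?case using Suc.IH[OF h] s ne by simp
qed

lemma rloop_other:
  "c' \<noteq> bcol P r c i \<Longrightarrow> rloop P r c n P' al ub (i, c') = P' (i, c')"
proof (induction n arbitrary: P' al ub)
  case 0 then show ?case by simp
next
  case (Suc j)
  obtain P'' al' where s: "rloop P r c (Suc j) P' al ub = rloop P r c j P'' al' (enat (the (P (Suc j, bcol P r c (Suc j)))))"
    "\<forall>x. x \<noteq> (Suc j, bcol P r c (Suc j)) \<longrightarrow> P'' x = P' x" using rloop_step_shape by blast
  have ne: "(i, c') \<noteq> (Suc j, bcol P r c (Suc j))" using Suc.prems by auto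
  show ?case using Suc.IH[OF Suc.prems] s ne by simp
qed

lemma ej_cong:
  assumes "ejectable P1 k x" "\<And>i c. k \<le> i \<Longrightarrow> P1 (i, c) = P2 (i, c)"
  shows "ejectable P2 k x"
  using assms
proof (induction rule: ejectable.induct)
  case (ej_stop x P k)
  have "row P k = row P2 k" using ej_stop(3) row_cong[of P k P2] by simp
  then show ?case using ej_stop ejectable.ej_stop by simp
next
  case (ej_step x P k)
  have "row P k = row P2 k" using ej_step(5) row_cong[of P k P2] by simp
  moreover have "ejectable P2 (k + 1) (x + 1)" using ej_step by simp
  ultimately show ?case using ej_step ejectable.ej_step by simp
qed

lemma ej_cong_iff:
  assumes "\<And>i c. k \<le> i \<Longrightarrow> P1 (i, c) = P2 (i, c)"
  shows "ejectable P1 k x \<longleftrightarrow> ejectable P2 k x"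
  using ej_cong[of P1 k x P2] ej_cong[of P2 k x P1] assms by metis

lemma mid_ok_congF:
  assumes "\<And>i' c. i \<le> i' \<Longrightarrow> F1 (i', c) = F2 (i', c)"
  shows "mid_ok P F1 i ci mi m' \<longleftrightarrow> mid_ok P F2 i ci mi m'"
proof -
  have e: "\<And>x. ejectable F1 (Suc i) x \<longleftrightarrow> ejectable F2 (Suc i) x"
    using ej_cong_iff[of "Suc i" F1 F2] assms by simp
  have f: "F1 (i, ci) = F2 (i, ci)" using assms by simp
  show ?thesis unfolding mid_ok_def nxt_ok_def e f by simp
qed

lemma end_ok_congF:
  assumes "\<And>i' c. i \<le> i' \<Longrightarrow> F1 (i', c) = F2 (i', c)"
  shows "end_ok P F1 i ci mi al \<longleftrightarrow> end_ok P F2 i ci mi al"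
proof -
  have e: "\<And>x. ejectable F1 (Suc i) x \<longleftrightarrow> ejectable F2 (Suc i) x"
    using ej_cong_iff[of "Suc i" F1 F2] assms by simp
  have f: "F1 (i, ci) = F2 (i, ci)" using assms by simp
  show ?thesis unfolding end_ok_def e f by simp
qed

lemma ej_step_iff:
  assumes "x \<in> row P k" "x + 1 \<in> row P k"
  shows "ejectable P k x \<longleftrightarrow> ejectable P (Suc k) (x + 1)"
proof
  assume "ejectable P k x"
  then show "ejectable P (Suc k) (x + 1)" using assms by (cases rule: ejectable.cases) auto
next
  assume "ejectable P (Suc k) (x + 1)"
  then show "ejectable P k x" using assms ejectable.ej_step by simp
qed

lemma not_in_row_upd:
  assumes P: "increasing_tableau P" and Pi: "P (i, ci) = Some mi"
    and same: "\<And>c'. c' \<noteq> ci \<Longrightarrow> P' (i, c') = P (i, c')" and ne: "P' (i, ci) \<noteq> Some mi"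
  shows "mi \<notin> row P' i"
proof
  assume "mi \<in> row P' i"
  then obtain c' where c': "P' (i, c') = Some mi" unfolding row_def by auto
  show False
  proof (cases "c' = ci")
    case True then show False using c' ne by simp
  next
    case False
    then have "P (i, c') = Some mi" using same c' by simp
    then show False using inc_row_inj[OF P Pi] False by simp
  qed
qed

lemma finite_row: "finite (dom P) \<Longrightarrow> finite (row P k)"
proof -
  assume "finite (dom P)"
  then have "finite (ran P)" by (rule finite_ran)
  moreover have "row P k \<subseteq> ran P" unfolding row_def ran_def by auto
  ultimately show ?thesis by (rule finite_subset[rotated])
qed

definition RF :: "tab \<Rightarrow> nat \<Rightarrow> nat \<Rightarrow> tab \<Rightarrow> nat \<Rightarrow> bool" where
  "RF P r c F i \<longleftrightarrow> (i < r \<longrightarrow> mid_ok P F i (bcol P r c i) (pm P r c i) (pm P r c (Suc i))) \<and>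
      (i = r \<longrightarrow> end_ok P F r (bcol P r c r) (pm P r c r) False)"

lemma RF_cong:
  assumes "\<And>i' c. i \<le> i' \<Longrightarrow> F1 (i', c) = F2 (i', c)"
  shows "RF P r c F1 i \<longleftrightarrow> RF P r c F2 i"
  unfolding RF_def using mid_ok_congF[of i F1 F2, OF assms] end_ok_congF[of i F1 F2, OF assms] by (cases "i = r") auto



lemma rloop_unfold:
  fixes P P' :: tab and r c j :: nat and ub :: enat and al :: bool
  defines "ci \<equiv> bcol P r c (Suc j)"
  defines "mi \<equiv> pm P r c (Suc j)"
  defines "X \<equiv> {x. ejectable P' (Suc (Suc j)) x \<and> mi < x \<and> enat x < ub}"
  shows "rloop P r c (Suc j) P' al ub =
     (if mi + 1 \<in> row P (Suc j) then rloop P r c j P' al (enat mi)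
      else if al \<and> ub \<noteq> \<infinity> \<and> the_enat ub \<notin> row P (Suc j)
        then rloop P r c j (P'((Suc j, ci) := Some (the_enat ub))) True (enat mi)
      else if X \<noteq> {} then rloop P r c j (P'((Suc j, ci) := Some (Max X))) True (enat mi)
      else rloop P r c j P' False (enat mi))"
  unfolding ci_def mi_def X_def pm_def by (simp only: rloop.simps Let_def) (simp only: Suc_eq_plus1)

lemma rloop_main:
  assumes P: "increasing_tableau P" and rc: "P (r, c) \<noteq> None" and out: "P (r, Suc c) = None"
  shows "n \<le> r \<Longrightarrow> finite (dom P') \<Longrightarrow> (\<forall>i c'. 1 \<le> i \<longrightarrow> i \<le> n \<longrightarrow> P' (i, c') = P (i, c')) \<Longrightarrow>
     (n = r \<and> \<not> al \<and> ub = \<infinity>) \<or> (n < r \<and> ub = enat (pm P r c (Suc n)) \<and> (al \<longleftrightarrow> \<not> ejectable P' (Suc n) (pm P r c (Suc n)))) \<Longrightarrow>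
     \<forall>i. 1 \<le> i \<longrightarrow> i \<le> n \<longrightarrow> RF P r c (rloop P r c n P' al ub) i"
proof (induction n arbitrary: P' al ub)
  case 0 then show ?case by simp
next
  case (Suc j)
  define i where "i = Suc j"
  define ci where "ci = bcol P r c i"
  define mi where "mi = pm P r c i"
  define X where "X = {x. ejectable P' (Suc i) x \<and> mi < x \<and> enat x < ub}"
  have ir: "1 \<le> i" "i \<le> r" using Suc.prems(1) unfolding i_def by auto
  have Pi: "P (i, ci) = Some mi" using pm_some[OF P rc ir] unfolding ci_def mi_def .
  have P'i: "\<And>c'. P' (i, c') = P (i, c')" using Suc.prems(3) ir unfolding i_def by auto
  have rowi: "row P' i = row P i" using P'i row_cong by metis
  have e: "rloop P r c (Suc j) P' al ub =
     (if mi + 1 \<in> row P i then rloop P r c j P' al (enat mi)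
      else if al \<and> ub \<noteq> \<infinity> \<and> the_enat ub \<notin> row P i
        then rloop P r c j (P'((i, ci) := Some (the_enat ub))) True (enat mi)
      else if X \<noteq> {} then rloop P r c j (P'((i, ci) := Some (Max X))) True (enat mi)
      else rloop P r c j P' False (enat mi))"
    unfolding i_def ci_def mi_def X_def by (rule rloop_unfold)
  have finX: "finite X"
  proof -
    have "X \<subseteq> row P' (Suc i)" unfolding X_def using ejectable_in_row by blast
    then show ?thesis using finite_row[OF Suc.prems(2)] finite_subset by blast
  qed
  have ej'': "\<And>z x. ejectable (P'((i, ci) := z)) (Suc i) x \<longleftrightarrow> ejectable P' (Suc i) x"
    by (rule ej_cong_iff) auto
  have cont: "\<And>P'' al'. finite (dom P'') \<Longrightarrow> (\<And>x. fst x \<noteq> i \<Longrightarrow> P'' x = P' x) \<Longrightarrow>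
      (al' \<longleftrightarrow> \<not> ejectable P'' i mi) \<Longrightarrow> RF P r c P'' i \<Longrightarrow>
      \<forall>i'. 1 \<le> i' \<longrightarrow> i' \<le> Suc j \<longrightarrow> RF P r c (rloop P r c j P'' al' (enat mi)) i'"
  proof -
    fix P'' al'
    assume f: "finite (dom P'')" and o: "\<And>x. fst x \<noteq> i \<Longrightarrow> P'' x = P' x"
      and a: "al' \<longleftrightarrow> \<not> ejectable P'' i mi" and rf: "RF P r c P'' i"
    have jr: "j \<le> r" using Suc.prems(1) by simp
    have rows: "\<forall>i' c'. 1 \<le> i' \<longrightarrow> i' \<le> j \<longrightarrow> P'' (i', c') = P (i', c')"
      using o Suc.prems(3) unfolding i_def by auto
    have inv: "(j = r \<and> \<not> al' \<and> enat mi = \<infinity>) \<or> (j < r \<and> enat mi = enat (pm P r c (Suc j)) \<and> (al' \<longleftrightarrow> \<not> ejectable P'' (Suc j) (pm P r c (Suc j))))"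
      using Suc.prems(1) a unfolding i_def mi_def by simp
    have IH: "\<forall>i'. 1 \<le> i' \<longrightarrow> i' \<le> j \<longrightarrow> RF P r c (rloop P r c j P'' al' (enat mi)) i'"
      using Suc.IH[OF jr f rows inv] .
    have "RF P r c (rloop P r c j P'' al' (enat mi)) i \<longleftrightarrow> RF P r c P'' i"
      by (rule RF_cong) (use rloop_rows_gt i_def in auto)
    then show "\<forall>i'. 1 \<le> i' \<longrightarrow> i' \<le> Suc j \<longrightarrow> RF P r c (rloop P r c j P'' al' (enat mi)) i'"
      using IH rf unfolding i_def by (metis le_Suc_eq)
  qed
  show ?case
  proof (cases "mi + 1 \<in> row P i")
    case D: True
    have eq: "rloop P r c (Suc j) P' al ub = rloop P r c j P' al (enat mi)"
      unfolding e using D by (simp only: if_True)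
    have ilt: "i < r"
    proof (rule ccontr)
      assume "\<not> i < r"
      then have "i = r" using ir by simp
      then have "ci = c" unfolding ci_def using bcol_r by simp
      then show False using outer_not_succ[OF P _ out] Pi D `i = r` by simp
    qed
    have ub: "ub = enat (pm P r c (Suc i))" "al \<longleftrightarrow> \<not> ejectable P' (Suc i) (pm P r c (Suc i))"
      using Suc.prems(4) ilt unfolding i_def by auto
    have mD: "pm P r c (Suc i) = mi + 1" using pm_D[OF P rc ir(1) ilt] D unfolding mi_def by simp
    have a: "al \<longleftrightarrow> \<not> ejectable P' i mi"
    proof -
      have "mi \<in> row P' i" using Pi rowi unfolding row_def by auto
      moreover have "mi + 1 \<in> row P' i" using D rowi by simp
      ultimately have "ejectable P' i mi \<longleftrightarrow> ejectable P' (Suc i) (mi + 1)" by (rule ej_step_iff)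
      then show ?thesis using ub mD by simp
    qed
    have rf: "RF P r c P' i"
      unfolding RF_def mid_ok_def using ilt Pi P'i D mD unfolding ci_def[symmetric] mi_def[symmetric] by simp
    show ?thesis unfolding eq using cont[OF Suc.prems(2) _ a rf] by simp
  next
    case nD: False
    show ?thesis
    proof (cases "al \<and> ub \<noteq> \<infinity> \<and> the_enat ub \<notin> row P i")
      case DR: True
      define P'' where "P'' = P'((i, ci) := Some (the_enat ub))"
      have eq: "rloop P r c (Suc j) P' al ub = rloop P r c j P'' True (enat mi)"
        unfolding e P''_def using nD DR by (simp only: if_True if_False simp_thms)
      have ilt: "i < r" using DR Suc.prems(4) unfolding i_def by auto
      have ub: "ub = enat (pm P r c (Suc i))" "al \<longleftrightarrow> \<not> ejectable P' (Suc i) (pm P r c (Suc i))"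
        using Suc.prems(4) ilt unfolding i_def by auto
      define m' where "m' = pm P r c (Suc i)"
      have tm: "the_enat ub = m'" using ub unfolding m'_def by simp
      have lt: "mi < m'" using pm_lt[OF P rc ir(1) ilt] unfolding mi_def m'_def by simp
      have a: "True \<longleftrightarrow> \<not> ejectable P'' i mi"
      proof -
        have "mi \<notin> row P'' i"
          by (rule not_in_row_upd[OF P Pi]) (use P'i lt tm in \<open>auto simp: P''_def\<close>)
        then show ?thesis using ejectable_in_row by blast
      qed
      have rf: "RF P r c P'' i"
      proof -
        have "\<not> ejectable P'' (Suc i) m'" using ub DR ej'' unfolding P''_def m'_def by simp
        moreover have "P'' (i, ci) = Some m'" unfolding P''_def using tm by simp
        moreover have "m' \<notin> row P i" using DR tm by simp
        ultimately show ?thesis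
          unfolding RF_def mid_ok_def using ilt nD lt
          unfolding ci_def[symmetric] mi_def[symmetric] m'_def[symmetric] by auto
      qed
      have f: "finite (dom P'')" using Suc.prems(2) unfolding P''_def by simp
      show ?thesis unfolding eq by (rule cont[OF f _ a rf]) (auto simp: P''_def)
    next
      case nDR: False
      show ?thesis
      proof (cases "X \<noteq> {}")
        case IR: True
        define y where "y = Max X"
        define P'' where "P'' = P'((i, ci) := Some y)"
        have eq: "rloop P r c (Suc j) P' al ub = rloop P r c j P'' True (enat mi)"
          unfolding e P''_def y_def using nD nDR IR by (simp only: if_True if_False simp_thms)
        have yX: "y \<in> X" unfolding y_def using finX IR by simp
        have ymax: "\<And>z. z \<in> X \<Longrightarrow> z \<le> y" unfolding y_def using finX by simp
        have y: "ejectable P' (Suc i) y" "mi < y" "enat y < ub" using yX unfolding X_def by auto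
        have a: "True \<longleftrightarrow> \<not> ejectable P'' i mi"
        proof -
          have "mi \<notin> row P'' i"
            by (rule not_in_row_upd[OF P Pi]) (use P'i y in \<open>auto simp: P''_def\<close>)
          then show ?thesis using ejectable_in_row by blast
        qed
        have rf: "RF P r c P'' i"
        proof (cases "i < r")
          case ilt: True
          have ub: "ub = enat (pm P r c (Suc i))" "al \<longleftrightarrow> \<not> ejectable P' (Suc i) (pm P r c (Suc i))"
            using Suc.prems(4) ilt unfolding i_def by auto
          define m' where "m' = pm P r c (Suc i)"
          have nx: "nxt_ok P P'' i ci y m'"
            unfolding nxt_ok_def
          proof (intro conjI allI impI)
            show "y < m'" using y(3) ub unfolding m'_def by simp
            show "P (i, Suc ci) = Some m' \<or> ejectable P'' (Suc i) m'"
            proof (cases al)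
              case True
              then have "m' \<in> row P i" using nDR ub unfolding m'_def by auto
              then show ?thesis using pm_in_row[OF P rc ir(1) ilt] unfolding m'_def ci_def by simp
            next
              case False
              then show ?thesis using ub ej'' unfolding P''_def m'_def by simp
            qed
          next
            fix z assume z: "y < z" "z < m'"
            show "\<not> ejectable P'' (Suc i) z"
            proof
              assume "ejectable P'' (Suc i) z"
              then have "z \<in> X" unfolding X_def using ej'' z y(2) ub unfolding P''_def m'_def by simp
              then show False using ymax z by fastforce
            qed
          next
            fix w assume "P (i, Suc ci) = Some w"
            then show "m' \<le> w" using pm_right[OF P rc ir(1) ilt] unfolding m'_def ci_def by simp
          qed
          have "ejectable P'' (Suc i) y" using y(1) ej'' unfolding P''_def by simp
          then show ?thesis unfolding RF_def mid_ok_def using ilt nD nx y(2)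
            unfolding ci_def[symmetric] mi_def[symmetric] m'_def[symmetric] P''_def by auto
        next
          case False
          then have ieq: "i = r" using ir by simp
          have ubi: "ub = \<infinity>" using Suc.prems(4) ieq unfolding i_def by auto
          have cr: "ci = c" unfolding ci_def using bcol_r ieq by simp
          have nz: "\<forall>z. y < z \<longrightarrow> \<not> ejectable P'' (Suc r) z"
          proof (intro allI impI notI)
            fix z assume z: "y < z" "ejectable P'' (Suc r) z"
            then have "z \<in> X" unfolding X_def using ej'' y(2) ubi ieq unfolding P''_def by simp
            then show False using ymax z by fastforce
          qed
          have "ejectable P'' (Suc r) y" using y(1) ej'' ieq unfolding P''_def by simp
          moreover have "mi + 1 \<notin> row P r" using nD ieq by simp
          moreover have "pm P r c r = mi" "bcol P r c r = ci" unfolding mi_def ci_def using ieq by simp_all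
          ultimately show ?thesis unfolding RF_def end_ok_def using ieq nz y(2) out cr
            unfolding P''_def by auto
        qed
        have f: "finite (dom P'')" using Suc.prems(2) unfolding P''_def by simp
        show ?thesis unfolding eq by (rule cont[OF f _ a rf]) (auto simp: P''_def)
      next
        case NR: False
        have eq: "rloop P r c (Suc j) P' al ub = rloop P r c j P' False (enat mi)"
          unfolding e using nD nDR NR by (simp only: if_True if_False simp_thms)
        have Xe: "X = {}" using NR by simp
        have a: "False \<longleftrightarrow> \<not> ejectable P' i mi"
        proof -
          have "mi \<in> row P' i" using Pi rowi unfolding row_def by auto
          moreover have "mi + 1 \<notin> row P' i" using nD rowi by simp
          ultimately show ?thesis using ejectable.ej_stop by simp
        qed
        have rf: "RF P r c P' i"
        proof (cases "i < r")
          case ilt: True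
          have ub: "ub = enat (pm P r c (Suc i))" "al \<longleftrightarrow> \<not> ejectable P' (Suc i) (pm P r c (Suc i))"
            using Suc.prems(4) ilt unfolding i_def by auto
          define m' where "m' = pm P r c (Suc i)"
          have nx: "nxt_ok P P' i ci mi m'"
            unfolding nxt_ok_def
          proof (intro conjI allI impI)
            show "mi < m'" using pm_lt[OF P rc ir(1) ilt] unfolding mi_def m'_def by simp
            show "P (i, Suc ci) = Some m' \<or> ejectable P' (Suc i) m'"
            proof (cases al)
              case True
              then have "m' \<in> row P i" using nDR ub unfolding m'_def by auto
              then show ?thesis using pm_in_row[OF P rc ir(1) ilt] unfolding m'_def ci_def by simp
            next
              case False
              then show ?thesis using ub unfolding m'_def by simp
            qed
          next
            fix z assume z: "mi < z" "z < m'"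
            show "\<not> ejectable P' (Suc i) z"
            proof
              assume "ejectable P' (Suc i) z"
              then have "z \<in> X" unfolding X_def using z ub unfolding m'_def by simp
              then show False using Xe by simp
            qed
          next
            fix w assume "P (i, Suc ci) = Some w"
            then show "m' \<le> w" using pm_right[OF P rc ir(1) ilt] unfolding m'_def ci_def by simp
          qed
          show ?thesis unfolding RF_def mid_ok_def using ilt nD nx Pi P'i
            unfolding ci_def[symmetric] mi_def[symmetric] m'_def[symmetric] by auto
        next
          case False
          then have ieq: "i = r" using ir by simp
          have ubi: "ub = \<infinity>" using Suc.prems(4) ieq unfolding i_def by auto
          have cr: "ci = c" unfolding ci_def using bcol_r ieq by simp
          have nz: "\<forall>z. mi < z \<longrightarrow> \<not> ejectable P' (Suc r) z"
          proof (intro allI impI notI)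
            fix z assume z: "mi < z" "ejectable P' (Suc r) z"
            then have "z \<in> X" unfolding X_def using ubi ieq by simp
            then show False using Xe by simp
          qed
          have "mi + 1 \<notin> row P r" using nD ieq by simp
          moreover have "pm P r c r = mi" "bcol P r c r = ci" unfolding mi_def ci_def using ieq by simp_all
          ultimately show ?thesis unfolding RF_def end_ok_def using ieq nz out cr Pi P'i by auto
        qed
        show ?thesis unfolding eq by (rule cont[OF Suc.prems(2) _ a rf]) auto
      qed
    qed
  qed
qed



lemma revins_cert:
  assumes P: "increasing_tableau P" and rc: "P (r, c) \<noteq> None" and out1: "P (r, Suc c) = None"
    and ri: "rev_insert P (r, c) al = (F, m)"
  shows "cert P F m r al (pm P r c) (bcol P r c)"
proof -
  obtain v0 where v0: "P (r, c) = Some v0" using rc by auto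
  have r1: "1 \<le> r" using inc_dom[OF P v0] by simp
  have m: "m = pm P r c 1" using ri unfolding rev_insert_def pm_def by simp
  define P0 where "P0 = (if al then P((r, c) := None) else P)"
  define n where "n = (if al then r - 1 else r)"
  have Fdef: "F = rloop P r c n P0 al (if al then enat (the (P (r, c))) else \<infinity>)"
    using ri unfolding rev_insert_def P0_def n_def by (cases al) auto
  have pmr: "pm P r c r = v0" unfolding pm_def using bcol_r v0 by simp
  have RFs: "\<forall>i. 1 \<le> i \<longrightarrow> i \<le> n \<longrightarrow> RF P r c F i"
  proof (cases al)
    case True
    have nle: "r - 1 \<le> r" by simp
    have f: "finite (dom (P((r, c) := None)))" using inc_finite[OF P] by simp
    have rows: "\<forall>i c'. 1 \<le> i \<longrightarrow> i \<le> r - 1 \<longrightarrow> (P((r, c) := None)) (i, c') = P (i, c')" by auto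
    have "pm P r c r \<notin> row (P((r, c) := None)) r"
      by (rule not_in_row_upd[OF P, of r c]) (use v0 pmr in auto)
    then have ne: "\<not> ejectable (P((r, c) := None)) r (pm P r c r)" using ejectable_in_row by blast
    have inv: "(r - 1 = r \<and> \<not> True \<and> enat (the (P (r, c))) = \<infinity>) \<or>
       (r - 1 < r \<and> enat (the (P (r, c))) = enat (pm P r c (Suc (r - 1))) \<and>
         (True \<longleftrightarrow> \<not> ejectable (P((r, c) := None)) (Suc (r - 1)) (pm P r c (Suc (r - 1)))))"
      using r1 ne pmr v0 by simp
    show ?thesis using rloop_main[OF P rc out1 nle f rows inv] Fdef True
      unfolding P0_def n_def by simp
  next
    case False
    have inv: "(r = r \<and> \<not> False \<and> \<infinity> = \<infinity>) \<or> (r < r \<and> (\<infinity>::enat) = enat (pm P r c (Suc r)) \<and>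
        (False \<longleftrightarrow> \<not> ejectable P (Suc r) (pm P r c (Suc r))))" by simp
    show ?thesis using rloop_main[OF P rc out1 order.refl inc_finite[OF P] _ inv] Fdef False
      unfolding P0_def n_def by simp
  qed
  have Fo: "\<And>i c'. i = 0 \<or> n < i \<or> c' \<noteq> bcol P r c i \<Longrightarrow> F (i, c') = P0 (i, c')"
    using rloop_rows_gt rloop_other Fdef by metis
  have P0o: "\<And>i c'. (i, c') \<noteq> (r, c) \<Longrightarrow> P0 (i, c') = P (i, c')" unfolding P0_def by auto
  have Fr: "al \<Longrightarrow> F (r, c) = None"
    using Fo[of r c] r1 unfolding n_def P0_def by simp
  have nr: "n < r \<or> n = r" "r - 1 \<le> n" unfolding n_def by auto
  show ?thesis
    unfolding cert_def
  proof (intro conjI allI impI)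
    show "1 \<le> r" by (rule r1)
    show "m = pm P r c 1" by (rule m)
  next
    fix c' show "P (0, c') = F (0, c')" using Fo[of 0 c'] P0o[of 0 c'] r1 by simp
  next
    fix i c' assume "r < i"
    then show "P (i, c') = F (i, c')" using Fo[of i c'] P0o[of i c'] nr by auto
  next
    fix i assume i: "1 \<le> i" "i \<le> r"
    show "1 \<le> bcol P r c i" using pcol_pos[OF P rc i] .
  next
    fix i assume i: "1 \<le> i" "i \<le> r"
    show "P (i, bcol P r c i) = Some (pm P r c i)" using pm_some[OF P rc i] .
  next
    fix i c' assume i: "1 \<le> i" "i \<le> r" "c' \<noteq> bcol P r c i"
    have "(i, c') \<noteq> (r, c)" using i bcol_r by auto
    then show "P (i, c') = F (i, c')" using Fo[of i c'] P0o[of i c'] i by simp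
  next
    fix i c' assume i: "1 \<le> i" "i \<le> r" "1 \<le> c'" "c' < bcol P r c i"
    have "(i, c') \<noteq> (r, c)" using i bcol_r by auto
    then have e: "F (i, c') = P (i, c')" using Fo[of i c'] P0o[of i c'] i by simp
    have Pi: "P (i, bcol P r c i) = Some (pm P r c i)" using pm_some[OF P rc i(1,2)] .
    have "P (i, c') \<noteq> None" using inc_closed[OF P, of i "bcol P r c i" i c'] Pi i by auto
    then obtain v where v: "P (i, c') = Some v" by auto
    have "v < pm P r c i" using inc_row_lt[OF P v Pi] i by simp
    then show "\<exists>v. F (i, c') = Some v \<and> v < pm P r c i" using e v by simp
  next
    fix i v assume i: "1 \<le> i" "i \<le> r" and Fv: "F (i, bcol P r c i) = Some v"
    show "pm P r c i \<le> v"
    proof (cases "i < r")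
      case True
      then have "i \<le> n" using nr by auto
      then have "RF P r c F i" using RFs i by simp
      then show ?thesis using True Fv unfolding RF_def mid_ok_def by auto
    next
      case False
      then have ir: "i = r" using i by simp
      show ?thesis
      proof (cases al)
        case True then show ?thesis using Fr Fv ir bcol_r by simp
      next
        case False
        then have "n = r" unfolding n_def by simp
        then have "RF P r c F r" using RFs r1 by simp
        then show ?thesis using ir Fv unfolding RF_def end_ok_def by auto
      qed
    qed
  next
    fix i assume i: "1 \<le> i" "i < r"
    show "pm P r c i < pm P r c (Suc i)" using pm_lt[OF P rc i] .
  next
    fix i assume i: "1 \<le> i" "i < r"
    then have "i \<le> n" using nr by auto
    then have "RF P r c F i" using RFs i by simp
    then show "mid_ok P F i (bcol P r c i) (pm P r c i) (pm P r c (Suc i))" using i unfolding RF_def by simp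
  next
    show "end_ok P F r (bcol P r c r) (pm P r c r) al"
    proof (cases al)
      case True then show ?thesis using Fr bcol_r unfolding end_ok_def by simp
    next
      case False
      then have "n = r" unfolding n_def by simp
      then have "RF P r c F r" using RFs r1 by simp
      then show ?thesis using False unfolding RF_def by simp
    qed
  qed
qed



lemma mid_ok_props:
  assumes "mid_ok P F i ci mi m'" "mi < m'"
  shows "\<exists>y. F (i, ci) = Some y \<and> mi \<le> y \<and> y \<le> m' \<and> (y = m' \<longrightarrow> m' \<notin> row P i \<and> \<not> ejectable F (Suc i) m')"
  using assms unfolding mid_ok_def nxt_ok_def by (auto split: if_splits)

lemma cert_inc:
  assumes P: "increasing_tableau P" and rc: "P (r, c) \<noteq> None" and out1: "P (r, Suc c) = None"
    and out2: "P (Suc r, c) = None"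
    and ct: "cert P F m r al (pm P r c) (bcol P r c)"
  shows "increasing_tableau F" and "\<And>x. F x \<noteq> None \<longleftrightarrow> P x \<noteq> None \<and> \<not> (al \<and> x = (r, c))"
proof -
  define cc where "cc = bcol P r c"
  define mm where "mm = pm P r c"
  have ct': "cert P F m r al mm cc" using ct unfolding cc_def mm_def .
  have r1: "1 \<le> r" using certD(1)[OF ct'] .
  have ccr: "cc r = c" unfolding cc_def using bcol_r by simp
  have Pp: "\<And>i. 1 \<le> i \<Longrightarrow> i \<le> r \<Longrightarrow> P (i, cc i) = Some (mm i)" using certD(6)[OF ct'] .
  have off: "\<And>i c'. \<not> (1 \<le> i \<and> i \<le> r \<and> c' = cc i) \<Longrightarrow> F (i, c') = P (i, c')"
  proof -
    fix i c' assume h: "\<not> (1 \<le> i \<and> i \<le> r \<and> c' = cc i)"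
    consider "i = 0" | "r < i" | "1 \<le> i" "i \<le> r" "c' \<noteq> cc i" using h by linarith
    then show "F (i, c') = P (i, c')"
      using certD(3)[OF ct'] certD(4)[OF ct'] certD(7)[OF ct'] by (cases; metis)
  qed
  have pathlow: "\<And>i y. 1 \<le> i \<Longrightarrow> i \<le> r \<Longrightarrow> F (i, cc i) = Some y \<Longrightarrow> mm i \<le> y"
    using certD(9)[OF ct'] by blast
  have pathmid: "\<And>i. 1 \<le> i \<Longrightarrow> i < r \<Longrightarrow> \<exists>y. F (i, cc i) = Some y \<and> mm i \<le> y \<and> y \<le> mm (Suc i) \<and>
      (y = mm (Suc i) \<longrightarrow> mm (Suc i) \<notin> row P i \<and> \<not> ejectable F (Suc i) (mm (Suc i)))"
    using mid_ok_props certD(10,11)[OF ct'] by blast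
  have pathr: "F (r, c) = None \<longleftrightarrow> al"
  proof -
    have "end_ok P F r (cc r) (mm r) al" using certD(12)[OF ct'] .
    then show ?thesis unfolding end_ok_def ccr by (cases al) auto
  qed
  have Pv: "\<And>x v. P x = Some v \<Longrightarrow> 0 < v" using inc_pos[OF P] .
  show domF: "\<And>x. F x \<noteq> None \<longleftrightarrow> P x \<noteq> None \<and> \<not> (al \<and> x = (r, c))"
  proof -
    fix x :: "nat \<times> nat"
    obtain i c' where x: "x = (i, c')" by (cases x)
    show "F x \<noteq> None \<longleftrightarrow> P x \<noteq> None \<and> \<not> (al \<and> x = (r, c))"
    proof (cases "1 \<le> i \<and> i \<le> r \<and> c' = cc i")
      case True
      then have Px: "P x \<noteq> None" using Pp x by simp
      show ?thesis
      proof (cases "i = r")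
        case True
        then have "c' = c" using `1 \<le> i \<and> i \<le> r \<and> c' = cc i` ccr by simp
        then show ?thesis using pathr Px x True by auto
      next
        case False
        then have "i < r" using `1 \<le> i \<and> i \<le> r \<and> c' = cc i` by simp
        then show ?thesis using pathmid[of i] Px x True by auto
      qed
    next
      case False
      then have "x \<noteq> (r, c)" using x ccr r1 by auto
      then show ?thesis using off[OF False] x by simp
    qed
  qed
  show "increasing_tableau F"
    unfolding increasing_tableau_def
  proof (intro conjI allI impI ballI)
    show "young_diagram (dom F)"
      unfolding young_diagram_def
    proof (intro conjI allI impI ballI)
      have "dom F \<subseteq> dom P" using domF unfolding dom_def by blast
      then show "finite (dom F)" using inc_finite[OF P] finite_subset by blast
    next
      fix x assume "x \<in> dom F"
      then have "x \<in> dom P" using domF unfolding dom_def by blast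
      then show "case x of (r, c) \<Rightarrow> 1 \<le> r \<and> 1 \<le> c" using P unfolding increasing_tableau_def young_diagram_def by blast
    next
      fix i c' i' c'' assume h: "(i, c') \<in> dom F" "1 \<le> i'" "i' \<le> i" "1 \<le> c''" "c'' \<le> c'"
      have hP: "P (i, c') \<noteq> None" "\<not> (al \<and> (i, c') = (r, c))" using h(1) domF unfolding dom_def by blast+
      have P2: "P (i', c'') \<noteq> None" using inc_closed[OF P hP(1) h(2-5)] .
      have "\<not> (al \<and> (i', c'') = (r, c))"
      proof
        assume a: "al \<and> (i', c'') = (r, c)"
        then have "(i, c') \<noteq> (r, c)" using hP(2) by auto
        then consider "r < i" | "i = r" "c < c'" using a h by fastforce
        then show False
        proof cases
          case 1
          then have "P (Suc r, c) \<noteq> None" using inc_closed[OF P hP(1), of "Suc r" c] a h by auto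
          then show False using out2 by simp
        next
          case 2
          then have "P (r, Suc c) \<noteq> None" using inc_closed[OF P hP(1), of r "Suc c"] a h by auto
          then show False using out1 by simp
        qed
      qed
      then show "(i', c'') \<in> dom F" using P2 domF unfolding dom_def by blast
    qed
  next
    fix v assume "v \<in> ran F"
    then obtain i c' where Fv: "F (i, c') = Some v" unfolding ran_def by auto
    show "0 < v"
    proof (cases "1 \<le> i \<and> i \<le> r \<and> c' = cc i")
      case True
      then have "mm i \<le> v" using pathlow Fv by auto
      moreover have "0 < mm i" using Pv Pp True by blast
      ultimately show ?thesis by simp
    next
      case False then show ?thesis using off Fv Pv by metis
    qed
  next
    fix i c' u v assume Fu: "F (i, c') = Some u" and Fv: "F (i, c' + 1) = Some v"
    have i1: "1 \<le> i"
    proof (rule ccontr)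
      assume "\<not> 1 \<le> i"
      then have "i = 0" by simp
      then have "P (i, c') = Some u" using off Fu by simp
      then show False using inc_dom[OF P] `i = 0` by fastforce
    qed
    show "u < v"
    proof (cases "i \<le> r")
      case False
      then show ?thesis using off Fu Fv inc_right[OF P] by (metis le_trans nat_le_linear)
    next
      case ir: True
      show ?thesis
      proof (cases "c' = cc i")
        case True
        then have nv: "c' + 1 \<noteq> cc i" by simp
        then have Pv': "P (i, c' + 1) = Some v" using off Fv by metis
        show ?thesis
        proof (cases "i < r")
          case False
          then have "i = r" using ir by simp
          then show ?thesis using Pv' out1 True ccr by simp
        next
          case ilt: True
          obtain y where y: "F (i, cc i) = Some y" "y \<le> mm (Suc i)"
             "y = mm (Suc i) \<longrightarrow> mm (Suc i) \<notin> row P i"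
            using pathmid[OF i1 ilt] by blast
          have uy: "u = y" using y(1) Fu True by simp
          have "mm (Suc i) \<le> v" using pm_right[OF P rc i1 ilt Pv'] True unfolding mm_def cc_def by simp
          moreover have "v \<in> row P i" using Pv' unfolding row_def by auto
          ultimately show ?thesis using y uy by (cases "y = mm (Suc i)") (auto simp: le_less)
        qed
      next
        case False
        then have Pu: "P (i, c') = Some u" using off Fu by metis
        show ?thesis
        proof (cases "c' + 1 = cc i")
          case True
          then have "mm i \<le> v" using pathlow[OF i1 ir] Fv by simp
          moreover have "u < mm i" using inc_right[OF P Pu] Pp[OF i1 ir] True by simp
          ultimately show ?thesis by simp
        next
          case False
          then have "P (i, c' + 1) = Some v" using off Fv by metis
          then show ?thesis using inc_right[OF P Pu] by simp
        qed
      qed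
    qed
  next
    fix i c' u v assume Fu: "F (i, c') = Some u" and Fv: "F (i + 1, c') = Some v"
    have i1: "1 \<le> i"
    proof (rule ccontr)
      assume "\<not> 1 \<le> i"
      then have "i = 0" by simp
      then have "P (i, c') = Some u" using off Fu by simp
      then show False using inc_dom[OF P] `i = 0` by fastforce
    qed
    define T where "T = (i \<le> r \<and> c' = cc i)"
    define B where "B = (Suc i \<le> r \<and> c' = cc (Suc i))"
    show "u < v"
    proof (cases T)
      case False
      then have Pu: "P (i, c') = Some u" using off Fu i1 unfolding T_def by metis
      show ?thesis
      proof (cases B)
        case True
        then have "mm (Suc i) \<le> v" using pathlow[of "Suc i"] Fv unfolding B_def by simp
        moreover have "u < mm (Suc i)" using inc_down[OF P Pu] Pp[of "Suc i"] True unfolding B_def by simp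
        ultimately show ?thesis by simp
      next
        case False
        then have "P (Suc i, c') = Some v" using off Fv unfolding B_def by (metis Suc_eq_plus1 le_add2 le_trans)
        then show ?thesis using inc_down[OF P Pu] by simp
      qed
    next
      case True
      have ilt: "i < r"
      proof (rule ccontr)
        assume "\<not> i < r"
        then have "i = r" using True unfolding T_def by simp
        then have "c' = c" using True ccr unfolding T_def by simp
        then have "F (Suc r, c) = Some v" using Fv `i = r` by simp
        then have "P (Suc r, c) = Some v" using off by simp
        then show False using out2 by simp
      qed
      obtain y where y: "F (i, cc i) = Some y" "y \<le> mm (Suc i)"
         "y = mm (Suc i) \<longrightarrow> mm (Suc i) \<notin> row P i \<and> \<not> ejectable F (Suc i) (mm (Suc i))"
        using pathmid[OF i1 ilt] by blast
      have uy: "u = y" using y(1) Fu True unfolding T_def by simp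
      have mono: "cc (Suc i) \<le> cc i" using pcol_mono[OF P rc i1 ilt] unfolding cc_def .
      show ?thesis
      proof (cases B)
        case False
        then have ne: "c' \<noteq> cc (Suc i)" using ilt unfolding B_def by simp
        then have Pv': "P (Suc i, c') = Some v" using off Fv by (metis Suc_eq_plus1)
        have "cc (Suc i) < c'" using mono ne True unfolding T_def by simp
        then have "mm (Suc i) < v" using inc_row_lt[OF P Pp[of "Suc i"] Pv'] ilt by simp
        then show ?thesis using uy y(2) by simp
      next
        case Bt: True
        have vge: "mm (Suc i) \<le> v" using pathlow[of "Suc i"] Fv Bt unfolding B_def by simp
        show ?thesis
        proof (cases "u < mm (Suc i)")
          case True then show ?thesis using vge by simp
        next
          case False
          then have ueq: "u = mm (Suc i)" using uy y(2) by simp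
          then have nr: "mm (Suc i) \<notin> row P i" and ne: "\<not> ejectable F (Suc i) (mm (Suc i))" using y(3) uy by auto
          show ?thesis
          proof (rule ccontr)
            assume "\<not> u < v"
            then have veq: "v = mm (Suc i)" using vge ueq by simp
            have cceq: "cc i = cc (Suc i)" "c' = cc i" using True Bt unfolding T_def B_def by auto
            have PS: "P (Suc i, cc (Suc i)) = Some (mm (Suc i))" using Pp[of "Suc i"] ilt by simp
            show False
            proof (cases "mm (Suc i) + 1 \<in> row P (Suc i)")
              case True
              then obtain c2 where c2: "P (Suc i, c2) = Some (mm (Suc i) + 1)" unfolding row_def by auto
              have lt2: "cc (Suc i) < c2" using inc_row_mono_rev[OF P PS c2] by simp
              have "P (i, Suc (cc i)) \<noteq> None"
                using inc_closed[OF P, of "Suc i" c2 i "Suc (cc i)"] c2 lt2 cceq i1 by auto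
              then obtain w where w: "P (i, Suc (cc i)) = Some w" by auto
              have "P (Suc i, Suc (cc i)) \<noteq> None"
                using inc_closed[OF P, of "Suc i" c2 "Suc i" "Suc (cc i)"] c2 lt2 cceq by auto
              then obtain w2 where w2: "P (Suc i, Suc (cc i)) = Some w2" by auto
              have "w < w2" using inc_down[OF P w] w2 by simp
              moreover have "w2 \<le> mm (Suc i) + 1" using inc_row_le[OF P w2 c2] lt2 cceq by simp
              ultimately have "w \<le> mm (Suc i)" by simp
              moreover have "w \<noteq> mm (Suc i)" using nr w unfolding row_def by auto
              ultimately have "w < mm (Suc i)" by simp
              then have "Suc (cc i) \<le> cc i" using pm_greatest[OF P rc i1 ilt w] unfolding mm_def cc_def by simp
              then show False by simp
            next
              case False
              have inrow: "mm (Suc i) \<in> row F (Suc i)" using Fv veq unfolding row_def by auto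
              have notrow: "mm (Suc i) + 1 \<notin> row F (Suc i)"
              proof
                assume "mm (Suc i) + 1 \<in> row F (Suc i)"
                then obtain c3 where c3: "F (Suc i, c3) = Some (mm (Suc i) + 1)" unfolding row_def by auto
                show False
                proof (cases "c3 = cc (Suc i)")
                  case True then show False using c3 Fv veq cceq by simp
                next
                  case False
                  then have "P (Suc i, c3) = Some (mm (Suc i) + 1)" using off c3 by metis
                  then show False using `mm (Suc i) + 1 \<notin> row P (Suc i)` unfolding row_def by auto
                qed
              qed
              have "ejectable F (Suc i) (mm (Suc i))" using ejectable.ej_stop[OF inrow notrow] .
              then show False using ne by simp
            qed
          qed
        qed
      qed
    qed
  qed
qed



lemma rsvt_ran: "rsvt Q \<Longrightarrow> Q x = Some S \<Longrightarrow> S \<noteq> {} \<and> finite S \<and> (\<forall>x\<in>S. x > 0)"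
  unfolding rsvt_def ran_def by blast

lemma rsvt_young: "rsvt Q \<Longrightarrow> young_diagram (dom Q)"
  unfolding rsvt_def by blast

lemma young_closed: "young_diagram D \<Longrightarrow> (r, c) \<in> D \<Longrightarrow> 1 \<le> r' \<Longrightarrow> r' \<le> r \<Longrightarrow> 1 \<le> c' \<Longrightarrow> c' \<le> c \<Longrightarrow> (r', c') \<in> D"
  unfolding young_diagram_def by blast

lemma young_pos: "young_diagram D \<Longrightarrow> (r, c) \<in> D \<Longrightarrow> 1 \<le> r \<and> 1 \<le> c"
  unfolding young_diagram_def by blast

lemma rsvt_col_lt:
  assumes Q: "rsvt Q" and S1: "Q (r1, c) = Some S1" and S2: "Q (r2, c) = Some S2" and lt: "r1 < r2"
  shows "Max S2 < Min S1"
proof -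
  have "Suc r1 \<le> r2" using lt by simp
  then show ?thesis using S2
  proof (induction r2 arbitrary: S2 rule: dec_induct)
    case base then show ?case using Q S1 unfolding rsvt_def by simp
  next
    case (step n)
    have y: "young_diagram (dom Q)" using rsvt_young[OF Q] .
    have "(Suc n, c) \<in> dom Q" using step(4) by auto
    moreover have "1 \<le> c" using young_pos[OF y calculation] by simp
    moreover have "1 \<le> n" using step(1) by simp
    ultimately have "(n, c) \<in> dom Q" using young_closed[OF y, of "Suc n" c n c] by simp
    then obtain Sn where Sn: "Q (n, c) = Some Sn" by auto
    have IH: "Max Sn < Min S1" using step.IH[OF Sn] .
    have "Max S2 < Min Sn" using Q Sn step(4) unfolding rsvt_def by simp
    moreover have "Min Sn \<le> Max Sn" using rsvt_ran[OF Q Sn] Max_ge Min_in by blast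
    ultimately show ?case using IH by simp
  qed
qed

lemma Max_diff_le: "finite S \<Longrightarrow> S - {q} \<noteq> {} \<Longrightarrow> Max (S - {q}) \<le> Max (S :: nat set)"
  by (rule Max_mono) auto

lemma psi_step_facts:
  assumes T: "(P, Q) \<in> calT" and Qne: "Q \<noteq> Map.empty" and st: "psi_step P Q = (P', Q', m, q)"
  shows "\<exists>r al mm cc. cert P P' m r al mm cc" and "(P', Q') \<in> calT"
proof -
  have P: "increasing_tableau P" and Q: "rsvt Q" and dPQ: "dom P = dom Q" using T unfolding calT_def by auto
  have finQ: "finite (dom Q)" using rsvt_young[OF Q] unfolding young_diagram_def by blast
  define U where "U = \<Union> (ran Q)"
  have ranne: "ran Q \<noteq> {}" using Qne by (metis empty_iff ranI not_Some_eq ext) 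
  have finU: "finite U" unfolding U_def using finite_ran[OF finQ] rsvt_ran[OF Q] unfolding ran_def by auto
  have Une: "U \<noteq> {}" unfolding U_def using ranne rsvt_ran[OF Q] unfolding ran_def by auto
  define q0 where "q0 = Min U"
  have q0U: "q0 \<in> U" unfolding q0_def using finU Une by simp
  have q0min: "\<And>x. x \<in> U \<Longrightarrow> q0 \<le> x" unfolding q0_def using finU by simp
  define G where "G = (\<lambda>c. \<exists>r S. Q (r, c) = Some S \<and> q0 \<in> S)"
  define c0 where "c0 = (GREATEST c. G c)"
  obtain rr cx Sx where x: "Q (rr, cx) = Some Sx" "q0 \<in> Sx" using q0U unfolding U_def ran_def by auto
  have Gx: "G cx" unfolding G_def using x by blast
  obtain B where B: "\<forall>i c. Q (i, c) \<noteq> None \<longrightarrow> c \<le> B"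
  proof -
    define B where "B = Max (snd ` dom Q)"
    have "\<forall>i c. Q (i, c) \<noteq> None \<longrightarrow> c \<le> B"
      unfolding B_def using finQ by (auto intro!: Max_ge simp: dom_def image_iff) (metis snd_conv)
    then show ?thesis using that by blast
  qed
  have Gb: "\<And>y. G y \<Longrightarrow> y \<le> B" unfolding G_def using B by fastforce
  have Gc0: "G c0" unfolding c0_def by (rule GreatestI_nat[of G cx B, OF Gx Gb])
  have Gmax: "\<And>y. G y \<Longrightarrow> y \<le> c0" unfolding c0_def by (rule Greatest_le_nat[of G _ B, OF _ Gb])
  have uniq: "\<And>r1 r2 S1 S2. Q (r1, c0) = Some S1 \<Longrightarrow> q0 \<in> S1 \<Longrightarrow> Q (r2, c0) = Some S2 \<Longrightarrow> q0 \<in> S2 \<Longrightarrow> r1 = r2"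
  proof -
    have one: "\<And>r1 r2 S1 S2. Q (r1, c0) = Some S1 \<Longrightarrow> q0 \<in> S1 \<Longrightarrow> Q (r2, c0) = Some S2 \<Longrightarrow> q0 \<in> S2 \<Longrightarrow> \<not> r1 < r2"
    proof
      fix r1 r2 S1 S2 assume h: "Q (r1, c0) = Some S1" "q0 \<in> S1" "Q (r2, c0) = Some S2" "q0 \<in> S2" "r1 < r2"
      have "Max S2 < Min S1" using rsvt_col_lt[OF Q h(1) h(3) h(5)] .
      moreover have "Min S1 \<le> q0" using h(2) rsvt_ran[OF Q h(1)] by simp
      moreover have "q0 \<le> Max S2" using h(4) rsvt_ran[OF Q h(3)] by simp
      ultimately show False by simp
    qed
    fix r1 r2 S1 S2 assume "Q (r1, c0) = Some S1" "q0 \<in> S1" "Q (r2, c0) = Some S2" "q0 \<in> S2"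
    then show "r1 = r2" using one[of r1 S1 r2 S2] one[of r2 S2 r1 S1] by simp
  qed
  define r0 where "r0 = (THE r. \<exists>S. Q (r, c0) = Some S \<and> q0 \<in> S)"
  obtain rg Sg where g: "Q (rg, c0) = Some Sg" "q0 \<in> Sg" using Gc0 unfolding G_def by blast
  have r0g: "r0 = rg" unfolding r0_def
    by (rule the_equality) (use g uniq in blast)+
  define S0 where "S0 = the (Q (r0, c0))"
  have QS0: "Q (r0, c0) = Some S0" and qS0: "q0 \<in> S0" using g r0g unfolding S0_def by auto
  have S0f: "S0 \<noteq> {}" "finite S0" using rsvt_ran[OF Q QS0] by auto
  have minS0: "Min S0 \<le> q0" using qS0 S0f by simp
  have out1: "Q (r0, Suc c0) = None"
  proof (rule ccontr)
    assume "Q (r0, Suc c0) \<noteq> None"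
    then obtain U1 where U1: "Q (r0, Suc c0) = Some U1" by auto
    have "Min S0 \<ge> Max U1" using Q QS0 U1 unfolding rsvt_def by simp
    then have le: "Max U1 \<le> q0" using minS0 by simp
    have U1f: "U1 \<noteq> {}" "finite U1" using rsvt_ran[OF Q U1] by auto
    have "Max U1 \<in> U1" using U1f by simp
    moreover then have "Max U1 \<in> U" unfolding U_def ran_def using U1 by blast
    ultimately have "Max U1 = q0" using le q0min by (meson antisym)
    then have "q0 \<in> U1" using `Max U1 \<in> U1` by simp
    then have "G (Suc c0)" unfolding G_def using U1 by blast
    then show False using Gmax by fastforce
  qed
  have out2: "Q (Suc r0, c0) = None"
  proof (rule ccontr)
    assume "Q (Suc r0, c0) \<noteq> None"
    then obtain U1 where U1: "Q (Suc r0, c0) = Some U1" by auto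
    have lt: "Min S0 > Max U1" using Q QS0 U1 unfolding rsvt_def by simp
    have U1f: "U1 \<noteq> {}" "finite U1" using rsvt_ran[OF Q U1] by auto
    have MU: "Max U1 \<in> U1" using U1f by simp
    have "Max U1 \<in> U" unfolding U_def ran_def using U1 MU by blast
    then have "q0 \<le> Max U1" using q0min by blast
    then show False using lt minS0 by linarith
  qed
  define al where "al = (S0 = {q0})"
  have st': "psi_step P Q = (fst (rev_insert P (r0, c0) al),
      (if al then Q((r0, c0) := None) else Q((r0, c0) := Some (S0 - {q0}))),
      snd (rev_insert P (r0, c0) al), q0)"
    unfolding psi_step_def Let_def q0_def[symmetric] U_def[symmetric] G_def[symmetric] c0_def[symmetric]
      r0_def[symmetric] S0_def[symmetric] al_def by (cases "S0 = {q0}") simp_all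
  have eqs: "P' = fst (rev_insert P (r0, c0) al)" "m = snd (rev_insert P (r0, c0) al)"
     "Q' = (if al then Q((r0, c0) := None) else Q((r0, c0) := Some (S0 - {q0})))" "q = q0"
    using st st' by auto
  have ri: "rev_insert P (r0, c0) al = (P', m)" using eqs by simp
  have Prc: "P (r0, c0) \<noteq> None" using QS0 dPQ by (metis domD domI option.distinct(1))
  have Pout1: "P (r0, Suc c0) = None" using out1 dPQ by (metis domIff)
  have Pout2: "P (Suc r0, c0) = None" using out2 dPQ by (metis domIff)
  have ct: "cert P P' m r0 al (pm P r0 c0) (bcol P r0 c0)"
    using revins_cert[OF P Prc Pout1 ri] .
  then show "\<exists>r al mm cc. cert P P' m r al mm cc" by blast
  have incP': "increasing_tableau P'" using cert_inc(1)[OF P Prc Pout1 Pout2 ct] .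
  have domP': "\<And>x. P' x \<noteq> None \<longleftrightarrow> P x \<noteq> None \<and> \<not> (al \<and> x = (r0, c0))"
    using cert_inc(2)[OF P Prc Pout1 Pout2 ct] .
  have domQ': "\<And>x. Q' x \<noteq> None \<longleftrightarrow> Q x \<noteq> None \<and> \<not> (al \<and> x = (r0, c0))"
    using eqs(3) QS0 by auto
  have dd: "dom P' = dom Q'"
  proof -
    have e: "\<And>x. P x \<noteq> None \<longleftrightarrow> Q x \<noteq> None"
    proof -
      fix x
      have "x \<in> dom P \<longleftrightarrow> x \<in> dom Q" using dPQ by simp
      then show "P x \<noteq> None \<longleftrightarrow> Q x \<noteq> None" by (simp add: domIff)
    qed
    show ?thesis
    proof (rule set_eqI)
      fix x show "x \<in> dom P' \<longleftrightarrow> x \<in> dom Q'" using domP'[of x] domQ'[of x] e[of x] by (simp add: domIff)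
    qed
  qed
  have ndiff: "\<not> al \<Longrightarrow> S0 - {q0} \<noteq> {}" using qS0 unfolding al_def by auto
  have Q'o: "\<And>x. x \<noteq> (r0, c0) \<Longrightarrow> Q' x = Q x" using eqs(3) by auto
  have Q'c: "Q' (r0, c0) = (if al then None else Some (S0 - {q0}))" using eqs(3) by auto
  have maxle: "\<not> al \<Longrightarrow> Max (S0 - {q0}) \<le> Max S0" using Max_diff_le[OF S0f(2) ndiff] by simp
  have rsQ': "rsvt Q'"
    unfolding rsvt_def
  proof (intro conjI allI impI)
    show "young_diagram (dom Q')" using incP' dd unfolding increasing_tableau_def by simp
  next
    show "\<forall>S\<in>ran Q'. S \<noteq> {} \<and> finite S \<and> (\<forall>x\<in>S. 0 < x)"
    proof
    fix S assume "S \<in> ran Q'"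
    then obtain x where x: "Q' x = Some S" unfolding ran_def by auto
    show "S \<noteq> {} \<and> finite S \<and> (\<forall>x\<in>S. 0 < x)"
    proof (cases "x = (r0, c0)")
      case True
      then have "\<not> al" "S = S0 - {q0}" using x Q'c by (auto split: if_splits)
      then show ?thesis using ndiff rsvt_ran[OF Q QS0] by auto
    next
      case False then show ?thesis using x Q'o rsvt_ran[OF Q] by metis
    qed
    qed
  next
    fix i j S1 U1 assume h: "Q' (i, j) = Some S1" "Q' (i, j + 1) = Some U1"
    show "Max U1 \<le> Min S1"
    proof (cases "(i, j) = (r0, c0)")
      case True
      then have "Q' (r0, Suc c0) = Some U1" using h by simp
      then show ?thesis using Q'o out1 by simp
    next
      case F1: False
      then have QS1: "Q (i, j) = Some S1" using h Q'o by simp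
      show ?thesis
      proof (cases "(i, j + 1) = (r0, c0)")
        case True
        then have "\<not> al" "U1 = S0 - {q0}" using h Q'c by (auto split: if_splits)
        moreover have "Max S0 \<le> Min S1" using Q QS1 QS0 True unfolding rsvt_def by auto
        ultimately show ?thesis using maxle by simp
      next
        case False
        then have "Q (i, j + 1) = Some U1" using h Q'o by simp
        then show ?thesis using Q QS1 unfolding rsvt_def by blast
      qed
    qed
  next
    fix i j S1 U1 assume h: "Q' (i, j) = Some S1" "Q' (i + 1, j) = Some U1"
    show "Max U1 < Min S1"
    proof (cases "(i, j) = (r0, c0)")
      case True
      then have "Q' (Suc r0, c0) = Some U1" using h by simp
      then show ?thesis using Q'o out2 by simp
    next
      case F1: False
      then have QS1: "Q (i, j) = Some S1" using h Q'o by simp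
      show ?thesis
      proof (cases "(i + 1, j) = (r0, c0)")
        case True
        then have "\<not> al" "U1 = S0 - {q0}" using h Q'c by (auto split: if_splits)
        moreover have "Max S0 < Min S1" using Q QS1 QS0 True unfolding rsvt_def by auto
        ultimately show ?thesis using maxle by simp
      next
        case False
        then have "Q (i + 1, j) = Some U1" using h Q'o by simp
        then show ?thesis using Q QS1 unfolding rsvt_def by blast
      qed
    qed
  qed
  show "(P', Q') \<in> calT" unfolding calT_def using incP' rsQ' dd by simp
qed

lemma psi_chain: "Psi_graph P Q A I \<Longrightarrow> (P, Q) \<in> calT \<Longrightarrow> chain P A"
proof (induction rule: Psi_graph.induct)
  case psi_empty show ?case by (rule chain_nil)
next
  case (psi_step Q P P' Q' m q a' i')
  obtain r al mm cc where ct: "cert P P' m r al mm cc" using psi_step_facts(1)[OF psi_step.prems psi_step.hyps(1,2)] by blast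
  have "(P', Q') \<in> calT" using psi_step_facts(2)[OF psi_step.prems psi_step.hyps(1,2)] .
  then have "chain P' a'" using psi_step.IH by simp
  then show ?case using chain_cons[OF ct] by simp
qed

theorem lemma2p13:
  fixes A I a i :: "nat list" and N :: int and P p :: tab and Q q :: stab
  assumes "(A, I) \<in> calC"
    and "N \<notin> int ` set A"
    and "a = filter (\<lambda>x. int x \<le> N) A"
    and "(a, i) \<in> calC"
    and "(P, Q) \<in> calT" and "Psi_graph P Q A I"
    and "(p, q) \<in> calT" and "Psi_graph p q a i"
  shows "restrict_le N P = p"
proof -
  have c1: "chain P A" using psi_chain[OF assms(6,5)] .
  have c2: "chain p a" using psi_chain[OF assms(8,7)] .
  have "chain (restrict_le N P) a" using chain_restrict[OF c1 assms(2)] assms(3) by simp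
  then show ?thesis using chain_inj c2 by blast
qed

end
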